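(* Let $x^*\in X$ satisfy $\langle F(x^* ),x-x^*\rangle\ge0$ and $\langle F(x),x-x^*\rangle\ge0$ for all $x\in X$. Let $\{x_t\}$ be generated by the SOE method with constant mini-batch size $m$ and let $\{\theta_t\}$ be nonnegative numbers such that for all $t=1,\dots,k$, $$\theta_{t+1}\gamma_{t+1}\lambda_{t+1}=\gamma_t\theta_t,\quad\theta_{t-1}\ge16L^2\gamma_t^2\lambda_t^2\theta_t,\quad\theta_t\le\theta_{t-1},$$ and $8L^2\gamma_k^2\le1$. Then, with $\tilde\sigma^2=\sigma^2/m$, $$\sum_{t=1}^k\frac{\theta_t}{8}\mathbb{E}\|x_{t+1}-x_t\|^2\le\theta_1V(x_1,x^* )+\sum_{t=1}^k8\theta_t\gamma_t^2\lambda_t^2\tilde\sigma^2+4\theta_k\gamma_k^2\tilde\sigma^2.$$ In particular, if $k\ge2$, $m=k+1$, $\theta_t=1$, $\lambda_t=1$, $\gamma_t=\frac1{4L}$ for all $t$, and $R$ is drawn uniformly from $\{2,3,\dots,k\}$ independently of the iterates and samples, then $$\mathbb{E}[\mathrm{res}(x_{R+1})^2]\le\frac{20\sigma^2}{k+1}+32\big[(L+4LL_\omega)^2+L^2\big]\frac{2V(x_1,x^* )+\sigma^2/L^2}{k-1}.$$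
   Context: Let $X\subseteq\mathbb{R}^n$ be a nonempty closed convex set, with the Euclidean norm $\|\cdot\|$ (so $\|\cdot\|_*=\|\cdot\|$). Let $F:X\to\mathbb{R}^n$ satisfy $\|F(x_1)-F(x_2)\|\le L\|x_1-x_2\|$ on $X$, $L>0$. Let $\omega$ be differentiable on $X$, strongly convex with modulus $1$, with $\|\nabla\omega(x_1)-\nabla\omega(x_2)\|\le L_\omega\|x_1-x_2\|$; let $V(x,y)=\omega(y)-\omega(x)-\langle\nabla\omega(x),y-x\rangle$. Stochastic oracle: for $x\in X$ and random $\xi$ it returns $\tilde F(x,\xi)$ with $\mathbb{E}[\tilde F(x,\xi)]=F(x)$ and $\mathbb{E}\|\tilde F(x,\xi)-F(x)\|^2\le\sigma^2$. SOE method with mini-batch $m$: given $x_0=x_1\in X$ and nonnegative $\{\gamma_t\},\{\lambda_t\}$; at each $t=1,\dots,k+1$ draw $m$ i.i.d. samples $\xi_{t,1},\dots,\xi_{t,m}$ independent of earlier samples and set $\tilde F(x_t)=\frac1m\sum_{i=1}^m\tilde F(x_t,\xi_{t,i})$; with the convention $\tilde F(x_0)=\tilde F(x_1)$, for $t=1,\dots,k$, $x_{t+1}=\operatorname{argmin}_{x\in X}\gamma_t\langle\tilde F(x_t)+\lambda_t(\tilde F(x_t)-\tilde F(x_{t-1})),x\rangle+V(x_t,x)$. With $N_X(\bar x)=\{y:\langle y,x-\bar x\rangle\le0\ \forall x\in X\}$, the residual is $\mathrm{res}(\bar x)=\min_{y\in-N_X(\bar x)}\|y-F(\bar x)\|$.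 *)

theory Defs
  imports "HOL-Analysis.Analysis" "HOL-Probability.Probability"
begin

definition strongly_convex_on :: "'a::real_normed_vector set \<Rightarrow> real \<Rightarrow> ('a \<Rightarrow> real) \<Rightarrow> bool" where
  "strongly_convex_on S mu f \<longleftrightarrow>
     (\<forall>x\<in>S. \<forall>y\<in>S. \<forall>u::real. 0 \<le> u \<and> u \<le> 1 \<longrightarrow>
        f (u *\<^sub>R x + (1 - u) *\<^sub>R y) \<le> u * f x + (1 - u) * f y - mu / 2 * u * (1 - u) * (norm (x - y))\<^sup>2)"

definition bregman :: "('a::real_inner \<Rightarrow> real) \<Rightarrow> ('a \<Rightarrow> 'a) \<Rightarrow> 'a \<Rightarrow> 'a \<Rightarrow> real" where
  "bregman w gw x y = w y - w x - inner (gw x) (y - x)"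

definition normal_cone :: "'a::real_inner set \<Rightarrow> 'a \<Rightarrow> 'a set" where
  "normal_cone X xb = {y. \<forall>x\<in>X. inner y (x - xb) \<le> 0}"

definition residual :: "'a::real_inner set \<Rightarrow> ('a \<Rightarrow> 'a) \<Rightarrow> 'a \<Rightarrow> real" where
  "residual X F xb = (INF y\<in>uminus ` normal_cone X xb. norm (y - F xb))"

definition batch_est :: "('a::real_vector \<Rightarrow> 's \<Rightarrow> 'a) \<Rightarrow> (nat \<Rightarrow> nat \<Rightarrow> 'w \<Rightarrow> 's) \<Rightarrow> nat
    \<Rightarrow> (nat \<Rightarrow> 'w \<Rightarrow> 'a) \<Rightarrow> nat \<Rightarrow> 'w \<Rightarrow> 'a" where
  "batch_est G xi m x t \<omega> = (1 / real m) *\<^sub>R (\<Sum>i<m. G (x t \<omega>) (xi t i \<omega>))"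

text \<open>The iterates x_1, ..., x_{k+1} (as random vectors over the sample space) are generated by
  the SOE method with step sizes gam, extrapolation parameters lam, mini-batch m, starting point x1;
  with the convention F~(x_0) = F~(x_1).\<close>
definition soe_iterates ::
  "'a::real_inner set \<Rightarrow> ('a \<Rightarrow> real) \<Rightarrow> ('a \<Rightarrow> 'a) \<Rightarrow> ('a \<Rightarrow> 's \<Rightarrow> 'a)
   \<Rightarrow> (nat \<Rightarrow> nat \<Rightarrow> 'w \<Rightarrow> 's) \<Rightarrow> nat \<Rightarrow> (nat \<Rightarrow> real) \<Rightarrow> (nat \<Rightarrow> real) \<Rightarrow> 'a \<Rightarrow> nat
   \<Rightarrow> (nat \<Rightarrow> 'w \<Rightarrow> 'a) \<Rightarrow> bool" where
  "soe_iterates X w gw G xi m gam lam x1 k x \<longleftrightarrow>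
     (\<forall>\<omega>. x 1 \<omega> = x1) \<and>
     (\<forall>t\<in>{1..k}. \<forall>\<omega>.
        (let Ft = batch_est G xi m x t \<omega>;
             Fp = batch_est G xi m x (if t = 1 then 1 else t - 1) \<omega>;
             g = Ft + lam t *\<^sub>R (Ft - Fp)
         in x (Suc t) \<omega> \<in> X \<and>
            (\<forall>z\<in>X. gam t * inner g (x (Suc t) \<omega>) + bregman w gw (x t \<omega>) (x (Suc t) \<omega>)
                    \<le> gam t * inner g z + bregman w gw (x t \<omega>) z)))"

text \<open>Independence of two random variables with possibly different codomain types
  (the library's indep_var requires equal codomain types); this is the unfolded form of
  the library lemma prob_space.indep_var_eq.\<close>
definition indep_rv :: "'w measure \<Rightarrow> 'b measure \<Rightarrow> ('w \<Rightarrow> 'b) \<Rightarrow> 'c measure \<Rightarrow> ('w \<Rightarrow> 'c) \<Rightarrow> bool" where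
  "indep_rv M S X T Y \<longleftrightarrow>
     X \<in> measurable M S \<and> Y \<in> measurable M T \<and>
     prob_space.indep_set M
       (sigma_sets (space M) {X -` A \<inter> space M | A. A \<in> sets S})
       (sigma_sets (space M) {Y -` A \<inter> space M | A. A \<in> sets T})"

end

theory Submission
  imports Defs
begin


locale cvx =
  fixes X :: "'a::euclidean_space set" and w :: "'a \<Rightarrow> real" and gw :: "'a \<Rightarrow> 'a"
  assumes X_convex: "convex X" and X_closed: "closed X" and X_ne: "X \<noteq> {}"
    and w_deriv: "\<forall>z\<in>X. (w has_derivative (\<lambda>h. inner (gw z) h)) (at z within X)"
    and w_sconvex: "strongly_convex_on X 1 w"
begin

lemma seg_in: assumes "y \<in> X" "z \<in> X" "0 \<le> s" "s \<le> 1" shows "z + s *\<^sub>R (y - z) \<in> X"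
proof -
  have "z + s *\<^sub>R (y - z) = (1 - s) *\<^sub>R z + s *\<^sub>R y" by (simp add: algebra_simps)
  thus ?thesis using assms X_convex unfolding convex_def by auto
qed

lemma dir_deriv:
  assumes y: "y \<in> X" and z: "z \<in> X"
  shows "((\<lambda>s. (w (z + s *\<^sub>R (y - z)) - w z) / s) \<longlongrightarrow> inner (gw z) (y - z)) (at_right 0)"
proof -
  have p: "((\<lambda>s. z + s *\<^sub>R (y - z)) has_derivative (\<lambda>s. s *\<^sub>R (y - z))) (at 0 within {0..1::real})"
    by (auto intro!: derivative_eq_intros)
  have sub: "(\<lambda>s. z + s *\<^sub>R (y - z)) ` {0..1} \<subseteq> X" using seg_in[OF y z] by auto
  have "((\<lambda>s. w (z + s *\<^sub>R (y - z))) has_derivative (\<lambda>s. inner (gw (z + 0 *\<^sub>R (y - z))) (s *\<^sub>R (y - z)))) (at 0 within {0..1})"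
    by (rule has_derivative_in_compose2[OF _ sub _ p]) (use w_deriv in auto)
  hence "((\<lambda>s. w (z + s *\<^sub>R (y - z))) has_field_derivative inner (gw z) (y - z)) (at 0 within {0..1})"
    unfolding has_field_derivative_def
    by (rule has_derivative_eq_rhs) (auto simp: fun_eq_iff)
  hence "((\<lambda>s. (w (z + s *\<^sub>R (y - z)) - w (z + 0 *\<^sub>R (y - z))) / (s - 0)) \<longlongrightarrow> inner (gw z) (y - z)) (at 0 within {0..1})"
    unfolding has_field_derivative_iff .
  thus ?thesis by (simp add: at_within_Icc_at_right)
qed

lemma V_lower:
  assumes x: "x \<in> X" and y: "y \<in> X"
  shows "bregman w gw x y \<ge> (norm (y - x))\<^sup>2 / 2"
proof -
  have ev: "\<forall>\<^sub>F s in at_right 0. (w (x + s *\<^sub>R (y - x)) - w x) / s \<le> w y - w x - (1 - s) / 2 * (norm (y - x))\<^sup>2"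
  proof -
    have "\<forall>\<^sub>F s in at_right (0::real). s \<in> {0<..<1}"
      by (rule eventually_at_right_real) auto
    thus ?thesis
    proof eventually_elim
      case (elim s)
      hence s: "0 < s" "s < 1" by auto
      have "w (s *\<^sub>R y + (1 - s) *\<^sub>R x) \<le> s * w y + (1 - s) * w x - 1 / 2 * s * (1 - s) * (norm (y - x))\<^sup>2"
        using w_sconvex x y s unfolding strongly_convex_on_def by auto
      moreover have "s *\<^sub>R y + (1 - s) *\<^sub>R x = x + s *\<^sub>R (y - x)" by (simp add: algebra_simps)
      ultimately have "w (x + s *\<^sub>R (y - x)) - w x \<le> s * (w y - w x - (1 - s) / 2 * (norm (y - x))\<^sup>2)"
        by (simp add: algebra_simps)
      thus ?case using s by (simp add: divide_simps mult.commute)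
    qed
  qed
  have lim2: "((\<lambda>s. w y - w x - (1 - s) / 2 * (norm (y - x))\<^sup>2) \<longlongrightarrow> w y - w x - (1 - 0) / 2 * (norm (y - x))\<^sup>2) (at_right 0)"
    by (intro tendsto_intros) auto
  have "inner (gw x) (y - x) \<le> w y - w x - (1 - 0) / 2 * (norm (y - x))\<^sup>2"
    by (rule tendsto_le[OF _ lim2 dir_deriv[OF y x] ev]) simp
  thus ?thesis unfolding bregman_def by simp
qed

lemma V_nonneg: "x \<in> X \<Longrightarrow> y \<in> X \<Longrightarrow> bregman w gw x y \<ge> 0"
  using V_lower[of x y] by (smt (verit) zero_le_power2 divide_nonneg_nonneg)

lemma opt_cond:
  assumes a: "a \<in> X" and z: "z \<in> X"
    and min: "\<forall>u\<in>X. inner v z + bregman w gw a z \<le> inner v u + bregman w gw a u"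
    and u: "u \<in> X"
  shows "inner (v + gw z - gw a) (u - z) \<ge> 0"
proof -
  have ev: "\<forall>\<^sub>F s in at_right 0. 0 \<le> inner v (u - z) + (w (z + s *\<^sub>R (u - z)) - w z) / s - inner (gw a) (u - z)"
  proof -
    have "\<forall>\<^sub>F s in at_right (0::real). s \<in> {0<..<1}"
      by (rule eventually_at_right_real) auto
    thus ?thesis
    proof eventually_elim
      case (elim s)
      hence s: "0 < s" "s < 1" by auto
      have q: "z + s *\<^sub>R (u - z) \<in> X" using seg_in[OF u z] s by auto
      have "inner v z + bregman w gw a z \<le> inner v (z + s *\<^sub>R (u - z)) + bregman w gw a (z + s *\<^sub>R (u - z))"
        using min q by blast
      hence "0 \<le> s * inner v (u - z) + (w (z + s *\<^sub>R (u - z)) - w z) - s * inner (gw a) (u - z)"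
        unfolding bregman_def by (simp add: inner_simps algebra_simps)
      hence "0 \<le> (s * inner v (u - z) + (w (z + s *\<^sub>R (u - z)) - w z) - s * inner (gw a) (u - z)) / s"
        using s by simp
      thus ?case using s by (simp add: diff_divide_distrib add_divide_distrib)
    qed
  qed
  have lim: "((\<lambda>s. inner v (u - z) + (w (z + s *\<^sub>R (u - z)) - w z) / s - inner (gw a) (u - z)) \<longlongrightarrow>
      inner v (u - z) + inner (gw z) (u - z) - inner (gw a) (u - z)) (at_right 0)"
    by (intro tendsto_intros dir_deriv[OF u z])
  have "0 \<le> inner v (u - z) + inner (gw z) (u - z) - inner (gw a) (u - z)"
    by (rule tendsto_le[OF _ lim tendsto_const ev]) simp
  thus ?thesis by (simp add: inner_simps)
qed

lemma three_point_id:
  "bregman w gw a u - bregman w gw z u - bregman w gw a z = inner (gw z - gw a) (u - z)"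
  unfolding bregman_def by (simp add: inner_simps algebra_simps)

lemma three_point:
  assumes a: "a \<in> X" and z: "z \<in> X"
    and min: "\<forall>u\<in>X. inner v z + bregman w gw a z \<le> inner v u + bregman w gw a u"
    and u: "u \<in> X"
  shows "inner v (z - u) + bregman w gw a z \<le> bregman w gw a u - bregman w gw z u"
proof -
  have "inner (v + gw z - gw a) (u - z) \<ge> 0" by (rule opt_cond[OF a z min u])
  hence "inner v (z - u) \<le> inner (gw z - gw a) (u - z)" by (simp add: inner_simps algebra_simps)
  thus ?thesis using three_point_id[of a u z] by linarith
qed

lemma strong_mono: "z \<in> X \<Longrightarrow> z' \<in> X \<Longrightarrow> inner (gw z' - gw z) (z' - z) \<ge> (norm (z' - z))\<^sup>2"
proof -
  assume z: "z \<in> X" and z': "z' \<in> X"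
  have "bregman w gw z z' + bregman w gw z' z = inner (gw z' - gw z) (z' - z)"
    unfolding bregman_def by (simp add: inner_simps algebra_simps)
  moreover have "(norm (z' - z))\<^sup>2 / 2 \<le> bregman w gw z z'" using V_lower[OF z z'] .
  moreover have "(norm (z' - z))\<^sup>2 / 2 \<le> bregman w gw z' z" using V_lower[OF z' z] by (simp add: norm_minus_commute)
  ultimately show ?thesis by linarith
qed

definition is_min :: "'a \<Rightarrow> 'a \<Rightarrow> 'a \<Rightarrow> bool" where
  "is_min a v z \<longleftrightarrow> z \<in> X \<and> (\<forall>u\<in>X. inner v z + bregman w gw a z \<le> inner v u + bregman w gw a u)"

lemma min_lip:
  assumes a: "a \<in> X" and a': "a' \<in> X" and m: "is_min a v z" and m': "is_min a' v' z'"
  shows "norm (z - z') \<le> norm (v - v') + norm (gw a - gw a')"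
proof -
  have z: "z \<in> X" and z': "z' \<in> X" using m m' unfolding is_min_def by auto
  have 1: "inner (v + gw z - gw a) (z' - z) \<ge> 0"
    using opt_cond[OF a z _ z'] m unfolding is_min_def by auto
  have 2: "inner (v' + gw z' - gw a') (z - z') \<ge> 0"
    using opt_cond[OF a' z' _ z] m' unfolding is_min_def by auto
  have "inner (gw z' - gw z) (z' - z) \<le> inner ((v - v') - (gw a - gw a')) (z' - z)"
    using 1 2 by (simp add: inner_simps algebra_simps)
  also have "\<dots> \<le> norm ((v - v') - (gw a - gw a')) * norm (z' - z)"
    by (rule norm_cauchy_schwarz)
  also have "\<dots> \<le> (norm (v - v') + norm (gw a - gw a')) * norm (z' - z)"
    by (intro mult_right_mono norm_triangle_ineq4) simp
  finally have "(norm (z' - z))\<^sup>2 \<le> (norm (v - v') + norm (gw a - gw a')) * norm (z' - z)"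
    using strong_mono[OF z z'] by linarith
  hence "norm (z' - z) \<le> norm (v - v') + norm (gw a - gw a')"
    by (cases "norm (z' - z) = 0") (auto simp: power2_eq_square)
  thus ?thesis by (simp add: norm_minus_commute)
qed

lemma min_unique: "a \<in> X \<Longrightarrow> is_min a v z \<Longrightarrow> is_min a v z' \<Longrightarrow> z = z'"
  using min_lip[of a a v z v z'] by simp

lemma w_cont: "continuous_on X w"
  by (rule has_derivative_continuous_on) (use w_deriv in blast)

lemma min_exists:
  assumes a: "a \<in> X"
  shows "\<exists>z. is_min a v z"
proof -
  define f where "f u = inner v u + bregman w gw a u" for u
  define K where "K = X \<inter> cball a (2 * norm v)"
  have Kc: "compact K" unfolding K_def
    by (intro closed_Int_compact X_closed compact_cball)
  have Kne: "K \<noteq> {}" using a unfolding K_def by auto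
  have fc: "continuous_on K f"
  proof -
    have "continuous_on X f" unfolding f_def bregman_def
      by (intro continuous_intros w_cont)
    thus ?thesis by (rule continuous_on_subset) (auto simp: K_def)
  qed
  obtain z where z: "z \<in> K" and zmin: "\<forall>y\<in>K. f z \<le> f y"
    using continuous_attains_inf[OF Kc Kne fc] by blast
  have fa: "f a = inner v a" unfolding f_def bregman_def by simp
  have "f z \<le> f u" if u: "u \<in> X" for u
  proof (cases "u \<in> K")
    case True thus ?thesis using zmin by blast
  next
    case False
    hence far: "norm (u - a) > 2 * norm v" using u unfolding K_def by (auto simp: dist_norm norm_minus_commute)
    have "f u \<ge> inner v u + (norm (u - a))\<^sup>2 / 2" unfolding f_def using V_lower[OF a u] by simp
    moreover have "inner v (u - a) \<ge> - (norm v * norm (u - a))"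
      using norm_cauchy_schwarz[of "-v" "u - a"] by (simp add: inner_simps)
    moreover have "norm v * norm (u - a) < (norm (u - a))\<^sup>2 / 2"
    proof -
      have "norm (u - a) * norm v < norm (u - a) * (norm (u - a) / 2)"
        using far by (intro mult_strict_left_mono) auto
      thus ?thesis by (simp add: power2_eq_square mult.commute)
    qed
    ultimately have "f u > f a" unfolding fa by (simp add: inner_simps)
    moreover have "f z \<le> f a" using zmin a Kne unfolding K_def by auto
    ultimately show ?thesis by simp
  qed
  thus ?thesis using z unfolding is_min_def f_def K_def by auto
qed

definition prox :: "'a \<Rightarrow> 'a \<Rightarrow> 'a" where
  "prox a v = (THE z. is_min a v z)"

lemma prox_is_min: "a \<in> X \<Longrightarrow> is_min a v (prox a v)"
  unfolding prox_def using min_exists min_unique by (metis theI')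

lemma prox_eq: "a \<in> X \<Longrightarrow> is_min a v z \<Longrightarrow> prox a v = z"
  using prox_is_min min_unique by blast

lemma prox_in: "a \<in> X \<Longrightarrow> prox a v \<in> X"
  using prox_is_min unfolding is_min_def by blast

definition Pc :: "'a \<Rightarrow> 'a \<Rightarrow> 'a" where
  "Pc a v = prox (closest_point X a) v"

lemma cp_in: "closest_point X a \<in> X"
  using closest_point_in_set[OF X_closed X_ne] .

lemma Pc_in: "Pc a v \<in> X" unfolding Pc_def by (rule prox_in[OF cp_in])

lemma Pc_eq: "a \<in> X \<Longrightarrow> Pc a v = prox a v"
  unfolding Pc_def using closest_point_self[of a X] by simp

end



locale soe = cvx X w gw
  for X :: "'a::euclidean_space set" and w gw +
  fixes F :: "'a \<Rightarrow> 'a" and L Lw \<sigma> :: real and G :: "'a \<Rightarrow> 's \<Rightarrow> 'a" and D :: "'s measure"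
    and m :: nat and x1 xs :: 'a
  assumes F_lip: "L-lipschitz_on X F" and L_pos: "L > 0"
    and gw_lip: "Lw-lipschitz_on X gw"
    and D_prob: "prob_space D"
    and G_meas: "(\<lambda>(z, s). G z s) \<in> borel_measurable (borel \<Otimes>\<^sub>M D)"
    and G_oracle: "\<forall>z\<in>X. integrable D (G z) \<and> (\<integral>s. G z s \<partial>D) = F z \<and>
                     (\<integral>\<^sup>+ s. ennreal ((norm (G z s - F z))\<^sup>2) \<partial>D) \<le> ennreal (\<sigma>\<^sup>2)"
    and m_pos: "m > 0"
    and x1_in: "x1 \<in> X" and xs_in: "xs \<in> X"
    and xs_sol: "\<forall>z\<in>X. inner (F xs) (z - xs) \<ge> 0 \<and> inner (F z) (z - xs) \<ge> 0"
begin

lemma Lw_nonneg: "Lw \<ge> 0" using gw_lip unfolding lipschitz_on_def by auto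

lemma gw_lipD: "a \<in> X \<Longrightarrow> b \<in> X \<Longrightarrow> norm (gw a - gw b) \<le> Lw * norm (a - b)"
  using gw_lip unfolding lipschitz_on_def by (auto simp: dist_norm)

lemma F_lipD: "a \<in> X \<Longrightarrow> b \<in> X \<Longrightarrow> norm (F a - F b) \<le> L * norm (a - b)"
  using F_lip unfolding lipschitz_on_def by (auto simp: dist_norm)

lemma Pc_lip: "norm (Pc a v - Pc a' v') \<le> norm (v - v') + Lw * norm (a - a')"
proof -
  have "norm (Pc a v - Pc a' v') \<le> norm (v - v') + norm (gw (closest_point X a) - gw (closest_point X a'))"
    unfolding Pc_def by (intro min_lip cp_in prox_is_min)
  also have "norm (gw (closest_point X a) - gw (closest_point X a')) \<le> Lw * norm (closest_point X a - closest_point X a')"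
    by (intro gw_lipD cp_in)
  also have "\<dots> \<le> Lw * norm (a - a')"
    using closest_point_lipschitz[OF X_convex X_closed X_ne, of a a'] Lw_nonneg
    by (intro mult_left_mono) (auto simp: dist_norm)
  finally show ?thesis by simp
qed

lemma Pc_cont: "continuous_on UNIV (\<lambda>p. Pc (fst p) (snd p))"
proof -
  have "(1 + Lw)-lipschitz_on UNIV (\<lambda>p. Pc (fst p) (snd p))"
  proof (rule lipschitz_onI)
    fix p q :: "'a \<times> 'a"
    have "dist (Pc (fst p) (snd p)) (Pc (fst q) (snd q)) \<le> norm (snd p - snd q) + Lw * norm (fst p - fst q)"
      using Pc_lip by (simp add: dist_norm)
    also have "\<dots> \<le> dist p q + Lw * dist p q"
      using Lw_nonneg dist_snd_le[of p q] dist_fst_le[of p q]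
      by (intro add_mono mult_left_mono) (auto simp: dist_norm)
    finally show "dist (Pc (fst p) (snd p)) (Pc (fst q) (snd q)) \<le> (1 + Lw) * dist p q"
      by (simp add: algebra_simps)
  qed (use Lw_nonneg in simp)
  thus ?thesis by (rule lipschitz_on_continuous_on)
qed

definition Fc :: "'a \<Rightarrow> 'a" where "Fc a = F (closest_point X a)"

lemma Fc_eq: "a \<in> X \<Longrightarrow> Fc a = F a"
  unfolding Fc_def using closest_point_self[of a X] by simp

lemma Fc_cont: "continuous_on UNIV Fc"
proof -
  have "L-lipschitz_on UNIV Fc"
  proof (rule lipschitz_onI)
    fix a b :: 'a
    have "dist (Fc a) (Fc b) \<le> L * dist (closest_point X a) (closest_point X b)"
      unfolding Fc_def using F_lipD[OF cp_in cp_in] by (simp add: dist_norm)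
    also have "\<dots> \<le> L * dist a b"
      using closest_point_lipschitz[OF X_convex X_closed X_ne, of a b] L_pos
      by (intro mult_left_mono) auto
    finally show "dist (Fc a) (Fc b) \<le> L * dist a b" .
  qed (use L_pos in simp)
  thus ?thesis by (rule lipschitz_on_continuous_on)
qed

lemma Fc_meas[measurable]: "Fc \<in> borel_measurable borel"
  using Fc_cont by (rule borel_measurable_continuous_onI)

definition est :: "'a \<Rightarrow> nat \<Rightarrow> (nat \<times> nat \<Rightarrow> 's) \<Rightarrow> 'a" where
  "est z t \<xi> = (1 / real m) *\<^sub>R (\<Sum>i<m. G z (\<xi> (t, i)))"

fun phi :: "(nat \<Rightarrow> real) \<Rightarrow> (nat \<Rightarrow> real) \<Rightarrow> nat \<Rightarrow> (nat \<times> nat \<Rightarrow> 's) \<Rightarrow> 'a" where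
  "phi gam lam 0 \<xi> = x1"
| "phi gam lam (Suc 0) \<xi> = x1"
| "phi gam lam (Suc (Suc t)) \<xi> =
     (let a = phi gam lam (Suc t) \<xi>; Ft = est a (Suc t) \<xi>;
          Fp = (if t = 0 then Ft else est (phi gam lam t \<xi>) t \<xi>)
      in Pc a (gam (Suc t) *\<^sub>R (Ft + lam (Suc t) *\<^sub>R (Ft - Fp))))"

lemma phi_in: "phi gam lam t \<xi> \<in> X"
  by (induction gam lam t \<xi> rule: phi.induct) (auto simp: x1_in Pc_in Let_def)

lemma phi_dep:
  "(\<forall>p\<in>{1..<t} \<times> {..<m}. \<xi> p = \<xi>' p) \<Longrightarrow> phi gam lam t \<xi> = phi gam lam t \<xi>'"
proof (induction gam lam t \<xi> rule: phi.induct)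
  case (3 gam lam t \<xi>)
  have h1: "phi gam lam (Suc t) \<xi> = phi gam lam (Suc t) \<xi>'"
    using 3(3) by (intro 3(1)) auto
  have h2: "t \<noteq> 0 \<Longrightarrow> phi gam lam t \<xi> = phi gam lam t \<xi>'"
    using 3(3) by (intro 3(2)[OF refl refl]) auto
  have e1: "est z (Suc t) \<xi> = est z (Suc t) \<xi>'" for z
    unfolding est_def using 3(3) by (intro arg_cong[where f="\<lambda>x. _ *\<^sub>R x"] sum.cong) auto
  have e2: "t \<noteq> 0 \<Longrightarrow> est z t \<xi> = est z t \<xi>'" for z
    unfolding est_def using 3(3) by (intro arg_cong[where f="\<lambda>x. _ *\<^sub>R x"] sum.cong) auto
  show ?case using h1 h2 e1 e2 by (simp add: Let_def)
qed auto

lemma G_comp_meas: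
  assumes f: "f \<in> borel_measurable N" and g: "g \<in> measurable N D"
  shows "(\<lambda>\<xi>. G (f \<xi>) (g \<xi>)) \<in> borel_measurable N"
proof -
  have "(\<lambda>\<xi>. (f \<xi>, g \<xi>)) \<in> measurable N (borel \<Otimes>\<^sub>M D)"
    by (intro measurable_Pair f g)
  from measurable_compose[OF this G_meas] show ?thesis by simp
qed

lemma est_meas:
  assumes f: "f \<in> borel_measurable (PiM K (\<lambda>_. D))" and K: "\<And>i. i < m \<Longrightarrow> (t, i) \<in> K"
  shows "(\<lambda>\<xi>. est (f \<xi>) t \<xi>) \<in> borel_measurable (PiM K (\<lambda>_. D))"
  unfolding est_def
  by (intro borel_measurable_scaleR borel_measurable_const borel_measurable_sum G_comp_meas f
        measurable_component_singleton K) auto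

lemma phi_meas:
  "{1..<t} \<times> {..<m} \<subseteq> K \<Longrightarrow> phi gam lam t \<in> borel_measurable (PiM K (\<lambda>_. D))"
proof (induction gam lam t "undefined :: nat \<times> nat \<Rightarrow> 's" arbitrary: K rule: phi.induct)
  case (3 gam lam t)
  have h1: "phi gam lam (Suc t) \<in> borel_measurable (PiM K (\<lambda>_. D))"
    using 3(3) by (intro 3(1)) auto
  have h2: "t \<noteq> 0 \<Longrightarrow> phi gam lam t \<in> borel_measurable (PiM K (\<lambda>_. D))"
    using 3(3) by (intro 3(2)[OF refl refl]) auto
  have e1: "(\<lambda>\<xi>. est (phi gam lam (Suc t) \<xi>) (Suc t) \<xi>) \<in> borel_measurable (PiM K (\<lambda>_. D))"
    using 3(3) by (intro est_meas h1) auto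
  have e2: "t \<noteq> 0 \<Longrightarrow> (\<lambda>\<xi>. est (phi gam lam t \<xi>) t \<xi>) \<in> borel_measurable (PiM K (\<lambda>_. D))"
    using 3(3) by (intro est_meas h2) auto
  define v where "v \<xi> = (let a = phi gam lam (Suc t) \<xi>; Ft = est a (Suc t) \<xi>;
          Fp = (if t = 0 then Ft else est (phi gam lam t \<xi>) t \<xi>)
      in (gam (Suc t) *\<^sub>R (Ft + lam (Suc t) *\<^sub>R (Ft - Fp))))" for \<xi>
  have vm: "v \<in> borel_measurable (PiM K (\<lambda>_. D))"
  proof (cases "t = 0")
    case True
    thus ?thesis unfolding v_def Let_def using e1 by simp
  next
    case False
    thus ?thesis unfolding v_def Let_def using e1 e2[OF False]
      by (intro borel_measurable_scaleR borel_measurable_add borel_measurable_diff borel_measurable_const) auto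
  qed
  have eq: "phi gam lam (Suc (Suc t)) = (\<lambda>\<xi>. Pc (phi gam lam (Suc t) \<xi>) (v \<xi>))"
    unfolding v_def by (auto simp: Let_def fun_eq_iff)
  show ?case unfolding eq by (rule borel_measurable_continuous_Pair[OF h1 vm Pc_cont])
next
  case (1 gam lam)
  have "phi gam lam 0 = (\<lambda>_. x1)" by (auto simp: fun_eq_iff)
  thus ?case by simp
next
  case (2 gam lam)
  have "phi gam lam (Suc 0) = (\<lambda>_. x1)" by (auto simp: fun_eq_iff)
  thus ?case by simp
qed

definition Xi :: "nat \<Rightarrow> (nat \<Rightarrow> nat \<Rightarrow> 'w \<Rightarrow> 's) \<Rightarrow> 'w \<Rightarrow> nat \<times> nat \<Rightarrow> 's" where
  "Xi k xi \<omega> = (\<lambda>p\<in>{1..Suc k} \<times> {..<m}. xi (fst p) (snd p) \<omega>)"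

lemma batch_est_Xi:
  "t \<in> {1..Suc k} \<Longrightarrow> x t \<omega> = phi gam lam t (Xi k xi \<omega>) \<Longrightarrow>
   batch_est G xi m x t \<omega> = est (phi gam lam t (Xi k xi \<omega>)) t (Xi k xi \<omega>)"
  unfolding batch_est_def est_def Xi_def by (auto intro!: sum.cong)

lemma phi_soe:
  assumes soe: "soe_iterates X w gw G xi m gam lam x1 k x" and t: "t \<in> {1..Suc k}"
  shows "x t \<omega> = phi gam lam t (Xi k xi \<omega>)"
  using t
proof (induction t rule: less_induct)
  case (less t)
  show ?case
  proof -
    have "t = 1 \<or> (\<exists>s. t = Suc (Suc s))" using less.prems by presburger
    moreover
    { assume "t = 1"
      hence ?thesis using soe unfolding soe_iterates_def by auto }
    moreover
    { fix s assume ts: "t = Suc (Suc s)"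
    let ?Xi = "Xi k xi \<omega>"
    have s1: "Suc s \<in> {1..k}" using less.prems ts by auto
    have IH1: "x (Suc s) \<omega> = phi gam lam (Suc s) ?Xi" using less.IH[of "Suc s"] s1 ts by auto
    have IH2: "s \<noteq> 0 \<Longrightarrow> x s \<omega> = phi gam lam s ?Xi" using less.IH[of s] s1 ts by auto
    define Ft where "Ft = batch_est G xi m x (Suc s) \<omega>"
    define Fp where "Fp = batch_est G xi m x (if Suc s = 1 then 1 else Suc s - 1) \<omega>"
    define g where "g = Ft + lam (Suc s) *\<^sub>R (Ft - Fp)"
    have step: "x (Suc (Suc s)) \<omega> \<in> X \<and>
            (\<forall>z\<in>X. gam (Suc s) * inner g (x (Suc (Suc s)) \<omega>) + bregman w gw (x (Suc s) \<omega>) (x (Suc (Suc s)) \<omega>)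
                    \<le> gam (Suc s) * inner g z + bregman w gw (x (Suc s) \<omega>) z)"
      using soe s1 unfolding soe_iterates_def Ft_def Fp_def g_def Let_def by blast
    have Ft: "Ft = est (phi gam lam (Suc s) ?Xi) (Suc s) ?Xi"
      unfolding Ft_def by (rule batch_est_Xi[where x=x, OF _ IH1]) (use s1 in auto)
    have Fp: "Fp = (if s = 0 then Ft else est (phi gam lam s ?Xi) s ?Xi)"
    proof (cases "s = 0")
      case True thus ?thesis unfolding Fp_def Ft_def by simp
    next
      case False thus ?thesis unfolding Fp_def by (simp, intro batch_est_Xi IH2) (use s1 in auto)
    qed
    have xin: "x (Suc s) \<omega> \<in> X" using IH1 phi_in by simp
    have ism: "is_min (x (Suc s) \<omega>) (gam (Suc s) *\<^sub>R g) (x (Suc (Suc s)) \<omega>)"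
      unfolding is_min_def using step by simp
    have "phi gam lam (Suc (Suc s)) ?Xi = Pc (x (Suc s) \<omega>) (gam (Suc s) *\<^sub>R g)"
      unfolding g_def Fp Ft IH1 by (simp add: Let_def)
    also have "\<dots> = x (Suc (Suc s)) \<omega>"
      using Pc_eq[OF xin] prox_eq[OF xin ism] by simp
    finally have ?thesis using ts by simp }
    ultimately show ?thesis by blast
  qed
qed

end


lemma young8: "(x::real) * y \<le> y\<^sup>2 / 8 + 2 * x\<^sup>2"
proof -
  have "0 \<le> (y - 4 * x)\<^sup>2 / 8" by simp
  thus ?thesis by (simp add: power2_eq_square algebra_simps)
qed

lemma sq_sum2: "((a::real) + b)\<^sup>2 \<le> 2 * a\<^sup>2 + 2 * b\<^sup>2"
proof -
  have "0 \<le> (a - b)\<^sup>2" by simp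
  thus ?thesis by (simp add: power2_eq_square algebra_simps)
qed

lemma norm_diff_sq: "(norm ((a::'a::real_normed_vector) - b))\<^sup>2 \<le> 2 * (norm a)\<^sup>2 + 2 * (norm b)\<^sup>2"
proof -
  have "norm (a - b) \<le> norm a + norm b" by (rule norm_triangle_ineq4)
  hence "(norm (a - b))\<^sup>2 \<le> (norm a + norm b)\<^sup>2" by (intro power_mono) auto
  thus ?thesis using sq_sum2[of "norm a" "norm b"] by linarith
qed

context soe begin

lemma det_step:
  fixes gam lam \<theta> :: "nat \<Rightarrow> real" and xx Fe :: "nat \<Rightarrow> 'a" and k t :: nat
  assumes nonneg: "\<forall>t. gam t \<ge> 0 \<and> lam t \<ge> 0 \<and> \<theta> t \<ge> 0"
    and xin: "\<forall>t. xx t \<in> X"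
    and step: "\<forall>t\<in>{1..k}. is_min (xx t) (gam t *\<^sub>R (Fe t + lam t *\<^sub>R (Fe t - (if t = 1 then Fe 1 else Fe (t - 1))))) (xx (Suc t))"
    and cond: "\<forall>t\<in>{1..k}. \<theta> (t + 1) * gam (t + 1) * lam (t + 1) = gam t * \<theta> t \<and>
                     \<theta> (t - 1) \<ge> 16 * L\<^sup>2 * (gam t)\<^sup>2 * (lam t)\<^sup>2 * \<theta> t \<and> \<theta> t \<le> \<theta> (t - 1)"
    and t: "t \<in> {1..k}"
  shows "\<theta> t * (norm (xx (Suc t) - xx t))\<^sup>2 / 2 + \<theta> t * gam t * inner (Fe (Suc t) - F (xx (Suc t))) (xx (Suc t) - xs)
   \<le> \<theta> t * bregman w gw (xx t) xs - \<theta> t * bregman w gw (xx (Suc t)) xs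
     + \<theta> t * gam t * inner (Fe (Suc t) - Fe t) (xx (Suc t) - xs)
     - (if t = 1 then 0 else \<theta> (t - 1) * gam (t - 1) * inner (Fe t - Fe (t - 1)) (xx t - xs))
     + \<theta> t * (norm (xx (Suc t) - xx t))\<^sup>2 / 4
     + (if t = 1 then 0 else \<theta> (t - 1) * (norm (xx t - xx (t - 1)))\<^sup>2 / 8)
     + (if t = 1 then 0 else 4 * \<theta> t * (gam t)\<^sup>2 * (lam t)\<^sup>2 *
          ((norm (Fe t - F (xx t)))\<^sup>2 + (norm (Fe (t - 1) - F (xx (t - 1))))\<^sup>2))"
proof -
  define a where "a = xx t"
  define z where "z = xx (Suc t)"
  define Dl where "Dl = Fe t - (if t = 1 then Fe 1 else Fe (t - 1))"
  define g where "g = Fe t + lam t *\<^sub>R Dl"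
  have a: "a \<in> X" and z: "z \<in> X" using xin by (auto simp: a_def z_def)
  have th: "\<theta> t \<ge> 0" and ga: "gam t \<ge> 0" and la: "lam t \<ge> 0" using nonneg by auto
  have ism: "is_min a (gam t *\<^sub>R g) z" using step t unfolding a_def z_def g_def Dl_def by auto
  have tp: "inner (gam t *\<^sub>R g) (z - xs) + bregman w gw a z \<le> bregman w gw a xs - bregman w gw z xs"
  proof -
    have "\<forall>u\<in>X. inner (gam t *\<^sub>R g) z + bregman w gw a z \<le> inner (gam t *\<^sub>R g) u + bregman w gw a u"
      using ism unfolding is_min_def by blast
    from three_point[OF a z this xs_in] show ?thesis .
  qed
  have Vl: "bregman w gw a z \<ge> (norm (z - a))\<^sup>2 / 2" using V_lower[OF a z] .
  have mono: "inner (F z) (z - xs) \<ge> 0" using xs_sol z by auto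
  have dec: "inner g (z - xs) = inner (Fe (Suc t) - F z) (z - xs) + inner (F z) (z - xs)
      - inner (Fe (Suc t) - Fe t) (z - xs) + lam t * inner Dl (a - xs) + lam t * inner Dl (z - a)"
    unfolding g_def by (simp add: inner_simps algebra_simps)
  define P where "P = inner (Fe (Suc t) - F z) (z - xs)"
  define Q where "Q = inner (Fe (Suc t) - Fe t) (z - xs)"
  define R1 where "R1 = inner Dl (a - xs)"
  define R2 where "R2 = inner Dl (z - a)"
  define dd where "dd = (norm (z - a))\<^sup>2"
  have main: "\<theta> t * gam t * (P - Q + lam t * R1 + lam t * R2) + \<theta> t * dd / 2
      \<le> \<theta> t * bregman w gw a xs - \<theta> t * bregman w gw z xs"
  proof -
    have "gam t * (P - Q + lam t * R1 + lam t * R2) + dd / 2 \<le> bregman w gw a xs - bregman w gw z xs"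
    proof -
      have "gam t * inner (F z) (z - xs) \<ge> 0" using mono ga by simp
      moreover have "inner (gam t *\<^sub>R g) (z - xs) = gam t * (P + inner (F z) (z - xs) - Q + lam t * R1 + lam t * R2)"
        using dec unfolding P_def Q_def R1_def R2_def by simp
      ultimately show ?thesis using tp Vl unfolding dd_def by (simp add: algebra_simps)
    qed
    from mult_left_mono[OF this th] show ?thesis by (simp add: algebra_simps)
  qed
  have Pe: "inner (Fe (Suc t) - F (xx (Suc t))) (xx (Suc t) - xs) = P" unfolding P_def z_def ..
  have Qe: "inner (Fe (Suc t) - Fe t) (xx (Suc t) - xs) = Q" unfolding Q_def z_def ..
  have dde: "(norm (xx (Suc t) - xx t))\<^sup>2 = dd" unfolding dd_def z_def a_def ..
  have dd0: "\<theta> t * dd \<ge> 0" using th unfolding dd_def by simp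
  have Va: "bregman w gw (xx t) xs = bregman w gw a xs" "bregman w gw (xx (Suc t)) xs = bregman w gw z xs"
    unfolding a_def z_def by auto
  show ?thesis
  proof (cases "t = 1")
    case True
    hence "Dl = 0" unfolding Dl_def by simp
    hence "R1 = 0" "R2 = 0" unfolding R1_def R2_def by auto
    hence "\<theta> t * gam t * P + \<theta> t * dd / 2 \<le> \<theta> t * bregman w gw a xs - \<theta> t * bregman w gw z xs + \<theta> t * gam t * Q"
      using main by (simp add: algebra_simps)
    thus ?thesis unfolding Pe Qe dde Va using True dd0 by simp
  next
    case False
    hence t2: "t \<ge> 2" "t - 1 \<in> {1..k}" and tt: "Suc (t - 1) = t" using t by auto
    have DlE: "Dl = Fe t - Fe (t - 1)" unfolding Dl_def using False by simp
    have c1: "\<theta> t * gam t * lam t = gam (t - 1) * \<theta> (t - 1)"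
      using cond t2(2) tt by (metis Suc_eq_plus1)
    have c2: "\<theta> (t - 1) \<ge> 16 * L\<^sup>2 * (gam t)\<^sup>2 * (lam t)\<^sup>2 * \<theta> t" using cond t by auto
    have R1E: "\<theta> t * gam t * (lam t * R1) = \<theta> (t - 1) * gam (t - 1) * inner (Fe t - Fe (t - 1)) (xx t - xs)"
    proof -
      have "\<theta> t * gam t * (lam t * R1) = (\<theta> t * gam t * lam t) * R1" by simp
      also have "\<dots> = \<theta> (t - 1) * gam (t - 1) * R1" using c1 by simp
      finally show ?thesis unfolding R1_def DlE a_def .
    qed
    define ap where "ap = xx (t - 1)"
    have ap: "ap \<in> X" using xin by (simp add: ap_def)
    define dt where "dt = norm (z - a)"
    define dp where "dp = norm (a - ap)"
    define e where "e = norm ((Fe t - F a) - (Fe (t - 1) - F ap))"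
    have DlN: "norm Dl \<le> L * dp + e"
    proof -
      have "Dl = (F a - F ap) + ((Fe t - F a) - (Fe (t - 1) - F ap))"
        unfolding DlE a_def ap_def by (simp add: algebra_simps)
      hence "norm Dl \<le> norm (F a - F ap) + e" unfolding e_def by (metis norm_triangle_ineq)
      thus ?thesis using F_lipD[OF a ap] unfolding dp_def by linarith
    qed
    define c where "c = \<theta> t * gam t * lam t"
    have c0: "c \<ge> 0" unfolding c_def using th ga la by simp
    have cross1: "- (c * R2) \<le> c * (norm Dl * dt)"
    proof -
      have "- R2 \<le> norm Dl * dt" unfolding R2_def dt_def
        using norm_cauchy_schwarz[of "-Dl" "z - a"] by (simp add: inner_simps)
      from mult_left_mono[OF this c0] show ?thesis by simp
    qed
    have cross2: "c * (norm Dl * dt) \<le> \<theta> t * ((gam t * lam t * L * dp) * dt) + \<theta> t * ((gam t * lam t * e) * dt)"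
    proof -
      have "c * (norm Dl * dt) \<le> c * ((L * dp + e) * dt)"
        using DlN c0 by (intro mult_left_mono mult_right_mono) (auto simp: dt_def)
      thus ?thesis unfolding c_def by (simp add: algebra_simps)
    qed
    have y1: "(gam t * lam t * L * dp) * dt \<le> dt\<^sup>2 / 8 + 2 * (gam t * lam t * L * dp)\<^sup>2" by (rule young8)
    have y2: "(gam t * lam t * e) * dt \<le> dt\<^sup>2 / 8 + 2 * (gam t * lam t * e)\<^sup>2" by (rule young8)
    have b1: "\<theta> t * (2 * (gam t * lam t * L * dp)\<^sup>2) \<le> \<theta> (t - 1) * dp\<^sup>2 / 8"
    proof -
      have "16 * L\<^sup>2 * (gam t)\<^sup>2 * (lam t)\<^sup>2 * \<theta> t * dp\<^sup>2 \<le> \<theta> (t - 1) * dp\<^sup>2"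
        using c2 by (intro mult_right_mono) auto
      thus ?thesis by (simp add: power_mult_distrib algebra_simps)
    qed
    have e2: "e\<^sup>2 \<le> 2 * (norm (Fe t - F a))\<^sup>2 + 2 * (norm (Fe (t - 1) - F ap))\<^sup>2"
      unfolding e_def by (rule norm_diff_sq)
    have b2: "\<theta> t * (2 * (gam t * lam t * e)\<^sup>2) \<le> 4 * \<theta> t * (gam t)\<^sup>2 * (lam t)\<^sup>2 *
          ((norm (Fe t - F a))\<^sup>2 + (norm (Fe (t - 1) - F ap))\<^sup>2)"
    proof -
      have "\<theta> t * (gam t)\<^sup>2 * (lam t)\<^sup>2 * e\<^sup>2 \<le> \<theta> t * (gam t)\<^sup>2 * (lam t)\<^sup>2 * (2 * (norm (Fe t - F a))\<^sup>2 + 2 * (norm (Fe (t - 1) - F ap))\<^sup>2)"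
        using e2 th by (intro mult_left_mono) auto
      thus ?thesis by (simp add: power_mult_distrib algebra_simps)
    qed
    have y1': "\<theta> t * ((gam t * lam t * L * dp) * dt) \<le> \<theta> t * (dt\<^sup>2 / 8 + 2 * (gam t * lam t * L * dp)\<^sup>2)"
      using y1 th by (rule mult_left_mono)
    have y2': "\<theta> t * ((gam t * lam t * e) * dt) \<le> \<theta> t * (dt\<^sup>2 / 8 + 2 * (gam t * lam t * e)\<^sup>2)"
      using y2 th by (rule mult_left_mono)
    have cr: "- (\<theta> t * gam t * (lam t * R2)) \<le> \<theta> t * dt\<^sup>2 / 4 + \<theta> (t - 1) * dp\<^sup>2 / 8 +
          4 * \<theta> t * (gam t)\<^sup>2 * (lam t)\<^sup>2 * ((norm (Fe t - F a))\<^sup>2 + (norm (Fe (t - 1) - F ap))\<^sup>2)"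
    proof -
      have hc: "\<theta> t * gam t * (lam t * R2) = c * R2" unfolding c_def by simp
      have y1'': "\<theta> t * ((gam t * lam t * L * dp) * dt) \<le> \<theta> t * dt\<^sup>2 / 8 + \<theta> t * (2 * (gam t * lam t * L * dp)\<^sup>2)"
        using y1' by (simp add: distrib_left)
      have y2'': "\<theta> t * ((gam t * lam t * e) * dt) \<le> \<theta> t * dt\<^sup>2 / 8 + \<theta> t * (2 * (gam t * lam t * e)\<^sup>2)"
        using y2' by (simp add: distrib_left)
      show ?thesis using hc cross1 cross2 y1'' y2'' b1 b2 by linarith
    qed
    have ddE: "dd = dt\<^sup>2" unfolding dd_def dt_def ..
    have m2: "\<theta> t * gam t * P + \<theta> t * dd / 2 \<le> \<theta> t * bregman w gw a xs - \<theta> t * bregman w gw z xs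
        + \<theta> t * gam t * Q - \<theta> t * gam t * (lam t * R1) - \<theta> t * gam t * (lam t * R2)"
      using main by (simp add: algebra_simps)
    have dpe: "(norm (xx t - xx (t - 1)))\<^sup>2 = dp\<^sup>2" unfolding dp_def a_def ap_def ..
    have fe: "Fe t - F (xx t) = Fe t - F a" "Fe (t - 1) - F (xx (t - 1)) = Fe (t - 1) - F ap"
      unfolding a_def ap_def by auto
    show ?thesis
      unfolding Pe Qe dde Va dpe fe using m2 cr R1E False ddE by simp
  qed
qed

lemma det_last:
  fixes gam lam \<theta> :: "nat \<Rightarrow> real" and xx Fe :: "nat \<Rightarrow> 'a" and k :: nat
  assumes nonneg: "\<forall>t. gam t \<ge> 0 \<and> lam t \<ge> 0 \<and> \<theta> t \<ge> 0"
    and xin: "\<forall>t. xx t \<in> X"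
    and last: "8 * L\<^sup>2 * (gam k)\<^sup>2 \<le> 1"
  shows "\<theta> k * gam k * inner (Fe (Suc k) - Fe k) (xx (Suc k) - xs)
     \<le> \<theta> k * bregman w gw (xx (Suc k)) xs + \<theta> k * (norm (xx (Suc k) - xx k))\<^sup>2 / 8
       + 2 * \<theta> k * (gam k)\<^sup>2 * ((norm (Fe (Suc k) - F (xx (Suc k))))\<^sup>2 + (norm (Fe k - F (xx k)))\<^sup>2)"
proof -
  define a where "a = xx k"
  define z where "z = xx (Suc k)"
  have a: "a \<in> X" and z: "z \<in> X" using xin by (auto simp: a_def z_def)
  have th: "\<theta> k \<ge> 0" and ga: "gam k \<ge> 0" using nonneg by auto
  define Dk where "Dk = Fe (Suc k) - Fe k"
  define \<rho> where "\<rho> = norm (z - xs)"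
  define dk where "dk = norm (z - a)"
  define e where "e = norm ((Fe (Suc k) - F z) - (Fe k - F a))"
  have DkN: "norm Dk \<le> L * dk + e"
  proof -
    have "Dk = (F z - F a) + ((Fe (Suc k) - F z) - (Fe k - F a))"
      unfolding Dk_def by (simp add: algebra_simps)
    hence "norm Dk \<le> norm (F z - F a) + e" unfolding e_def by (metis norm_triangle_ineq)
    thus ?thesis using F_lipD[OF z a] unfolding dk_def by linarith
  qed
  have s1: "inner Dk (z - xs) \<le> norm Dk * \<rho>"
    unfolding \<rho>_def by (rule order_trans[OF _ norm_cauchy_schwarz]) simp
  have s2: "gam k * (norm Dk * \<rho>) \<le> \<rho>\<^sup>2 / 2 + (gam k)\<^sup>2 * (norm Dk)\<^sup>2 / 2"
  proof -
    have "0 \<le> (\<rho> - gam k * norm Dk)\<^sup>2 / 2" by simp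
    thus ?thesis by (simp add: power2_eq_square algebra_simps)
  qed
  have s3: "\<rho>\<^sup>2 / 2 \<le> bregman w gw z xs"
    using V_lower[OF z xs_in] unfolding \<rho>_def by (simp add: norm_minus_commute)
  have s4: "(norm Dk)\<^sup>2 \<le> 2 * L\<^sup>2 * dk\<^sup>2 + 2 * e\<^sup>2"
  proof -
    have "(norm Dk)\<^sup>2 \<le> (L * dk + e)\<^sup>2" using DkN by (intro power_mono) auto
    also have "\<dots> \<le> 2 * (L * dk)\<^sup>2 + 2 * e\<^sup>2" by (rule sq_sum2)
    finally show ?thesis by (simp add: power_mult_distrib)
  qed
  have s5: "(gam k)\<^sup>2 * (norm Dk)\<^sup>2 / 2 \<le> dk\<^sup>2 / 8 + (gam k)\<^sup>2 * e\<^sup>2"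
  proof -
    have "(gam k)\<^sup>2 * (norm Dk)\<^sup>2 \<le> (gam k)\<^sup>2 * (2 * L\<^sup>2 * dk\<^sup>2 + 2 * e\<^sup>2)"
      using s4 by (intro mult_left_mono) auto
    moreover have "8 * L\<^sup>2 * (gam k)\<^sup>2 * dk\<^sup>2 \<le> 1 * dk\<^sup>2"
      using last by (intro mult_right_mono) auto
    ultimately show ?thesis by (simp add: algebra_simps)
  qed
  have s6: "(gam k)\<^sup>2 * e\<^sup>2 \<le> 2 * (gam k)\<^sup>2 * ((norm (Fe (Suc k) - F z))\<^sup>2 + (norm (Fe k - F a))\<^sup>2)"
  proof -
    have "e\<^sup>2 \<le> 2 * (norm (Fe (Suc k) - F z))\<^sup>2 + 2 * (norm (Fe k - F a))\<^sup>2"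
      unfolding e_def by (rule norm_diff_sq)
    from mult_left_mono[OF this, of "(gam k)\<^sup>2"] show ?thesis by (simp add: algebra_simps)
  qed
  have s7: "gam k * inner Dk (z - xs) \<le> bregman w gw z xs + dk\<^sup>2 / 8
      + 2 * (gam k)\<^sup>2 * ((norm (Fe (Suc k) - F z))\<^sup>2 + (norm (Fe k - F a))\<^sup>2)"
  proof -
    have "gam k * inner Dk (z - xs) \<le> gam k * (norm Dk * \<rho>)" using s1 ga by (rule mult_left_mono)
    thus ?thesis using s2 s3 s5 s6 by linarith
  qed
  from mult_left_mono[OF s7 th] show ?thesis
    unfolding Dk_def a_def z_def dk_def by (simp add: algebra_simps norm_minus_commute)
qed

lemma det_ineq:
  fixes gam lam \<theta> :: "nat \<Rightarrow> real" and xx Fe :: "nat \<Rightarrow> 'a" and k :: nat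
  assumes nonneg: "\<forall>t. gam t \<ge> 0 \<and> lam t \<ge> 0 \<and> \<theta> t \<ge> 0"
    and xin: "\<forall>t. xx t \<in> X"
    and step: "\<forall>t\<in>{1..k}. is_min (xx t) (gam t *\<^sub>R (Fe t + lam t *\<^sub>R (Fe t - (if t = 1 then Fe 1 else Fe (t - 1))))) (xx (Suc t))"
    and cond: "\<forall>t\<in>{1..k}. \<theta> (t + 1) * gam (t + 1) * lam (t + 1) = gam t * \<theta> t \<and>
                     \<theta> (t - 1) \<ge> 16 * L\<^sup>2 * (gam t)\<^sup>2 * (lam t)\<^sup>2 * \<theta> t \<and> \<theta> t \<le> \<theta> (t - 1)"
    and last: "8 * L\<^sup>2 * (gam k)\<^sup>2 \<le> 1"
  shows "(\<Sum>t=1..k. \<theta> t / 8 * (norm (xx (Suc t) - xx t))\<^sup>2)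
       + (\<Sum>t=1..k. \<theta> t * gam t * inner (Fe (Suc t) - F (xx (Suc t))) (xx (Suc t) - xs))
     \<le> \<theta> 1 * bregman w gw (xx 1) xs
       + (\<Sum>t=1..k. (if t = 1 then 0 else 4 * \<theta> t * (gam t)\<^sup>2 * (lam t)\<^sup>2 *
          ((norm (Fe t - F (xx t)))\<^sup>2 + (norm (Fe (t - 1) - F (xx (t - 1))))\<^sup>2)))
       + 2 * \<theta> k * (gam k)\<^sup>2 * ((norm (Fe (Suc k) - F (xx (Suc k))))\<^sup>2 + (norm (Fe k - F (xx k)))\<^sup>2)"
proof (cases "k = 0")
  case True
  have "0 \<le> \<theta> 1 * bregman w gw (xx 1) xs" using nonneg V_nonneg[OF _ xs_in] xin by simp
  moreover have "0 \<le> 2 * \<theta> k * (gam k)\<^sup>2 * ((norm (Fe (Suc k) - F (xx (Suc k))))\<^sup>2 + (norm (Fe k - F (xx k)))\<^sup>2)"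
    using nonneg by simp
  ultimately show ?thesis using True by simp
next
  case False
  hence k1: "k \<ge> 1" by simp
  define dsq where "dsq t = (norm (xx (Suc t) - xx t))\<^sup>2" for t
  define XX where "XX t = \<theta> t * gam t * inner (Fe (Suc t) - F (xx (Suc t))) (xx (Suc t) - xs)" for t
  define V where "V t = bregman w gw (xx t) xs" for t
  define r where "r t = \<theta> t * gam t * inner (Fe (Suc t) - Fe t) (xx (Suc t) - xs)" for t
  define NN where "NN t = (if t = 1 then 0 else 4 * \<theta> t * (gam t)\<^sup>2 * (lam t)\<^sup>2 *
          ((norm (Fe t - F (xx t)))\<^sup>2 + (norm (Fe (t - 1) - F (xx (t - 1))))\<^sup>2))" for t
  define TD where "TD n = (\<Sum>t=1..n. \<theta> t * dsq t)" for n
  have Vnn: "V t \<ge> 0" for t unfolding V_def using V_nonneg[OF _ xs_in] xin by auto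
  have ds: "\<theta> t * dsq t / 2 + XX t \<le> \<theta> t * V t - \<theta> t * V (Suc t) + r t
      - (if t = 1 then 0 else r (t - 1)) + \<theta> t * dsq t / 4
      + (if t = 1 then 0 else \<theta> (t - 1) * dsq (t - 1) / 8) + NN t" if t: "t \<in> {1..k}" for t
  proof -
    have tt: "t \<noteq> 1 \<Longrightarrow> Suc (t - 1) = t" using t by auto
    show ?thesis
      using det_step[OF nonneg xin step cond t] tt
      unfolding dsq_def XX_def V_def r_def NN_def by (cases "t = 1") auto
  qed
  have P: "n \<in> {1..k} \<longrightarrow> TD n / 2 + (\<Sum>t=1..n. XX t) \<le> \<theta> 1 * V 1 - \<theta> n * V (Suc n) + r n
      + TD n / 4 + TD n / 8 - \<theta> n * dsq n / 8 + (\<Sum>t=1..n. NN t)" for n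
  proof (induction n)
    case 0 show ?case by simp
  next
    case (Suc n)
    show ?case
    proof
      assume n1: "Suc n \<in> {1..k}"
      show "TD (Suc n) / 2 + (\<Sum>t=1..Suc n. XX t) \<le> \<theta> 1 * V 1 - \<theta> (Suc n) * V (Suc (Suc n)) + r (Suc n)
        + TD (Suc n) / 4 + TD (Suc n) / 8 - \<theta> (Suc n) * dsq (Suc n) / 8 + (\<Sum>t=1..Suc n. NN t)"
      proof (cases "n = 0")
        case True
        show ?thesis using ds[of 1] k1 True unfolding TD_def NN_def by simp
      next
        case False
        hence n0: "n \<in> {1..k}" using n1 by auto
        have IH: "TD n / 2 + (\<Sum>t=1..n. XX t) \<le> \<theta> 1 * V 1 - \<theta> n * V (Suc n) + r n
          + TD n / 4 + TD n / 8 - \<theta> n * dsq n / 8 + (\<Sum>t=1..n. NN t)" using Suc.IH n0 by blast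
        have st: "\<theta> (Suc n) * dsq (Suc n) / 2 + XX (Suc n) \<le> \<theta> (Suc n) * V (Suc n) - \<theta> (Suc n) * V (Suc (Suc n)) + r (Suc n)
          - r n + \<theta> (Suc n) * dsq (Suc n) / 4 + \<theta> n * dsq n / 8 + NN (Suc n)"
          using ds[OF n1] False by simp
        have mono: "\<theta> (Suc n) * V (Suc n) \<le> \<theta> n * V (Suc n)"
        proof -
          have "\<theta> (Suc n) \<le> \<theta> (Suc n - 1)" using cond n1 by blast
          thus ?thesis using Vnn by (intro mult_right_mono) auto
        qed
        have TDs: "TD (Suc n) = TD n + \<theta> (Suc n) * dsq (Suc n)" unfolding TD_def by simp
        have s1: "(\<Sum>t=1..Suc n. XX t) = (\<Sum>t=1..n. XX t) + XX (Suc n)" by simp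
        have s2: "(\<Sum>t=1..Suc n. NN t) = (\<Sum>t=1..n. NN t) + NN (Suc n)" by simp
        show ?thesis unfolding TDs s1 s2 add_divide_distrib using IH st mono by linarith
      qed
    qed
  qed
  have Pk: "TD k / 2 + (\<Sum>t=1..k. XX t) \<le> \<theta> 1 * V 1 - \<theta> k * V (Suc k) + r k
      + TD k / 4 + TD k / 8 - \<theta> k * dsq k / 8 + (\<Sum>t=1..k. NN t)" using P[of k] k1 by auto
  have rk: "r k \<le> \<theta> k * V (Suc k) + \<theta> k * dsq k / 8
       + 2 * \<theta> k * (gam k)\<^sup>2 * ((norm (Fe (Suc k) - F (xx (Suc k))))\<^sup>2 + (norm (Fe k - F (xx k)))\<^sup>2)"
    using det_last[OF nonneg xin last] unfolding r_def V_def dsq_def .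
  have "(\<Sum>t=1..k. \<theta> t / 8 * (norm (xx (Suc t) - xx t))\<^sup>2) = TD k / 8"
    unfolding TD_def dsq_def by (simp add: sum_divide_distrib)
  thus ?thesis using Pk rk unfolding XX_def[symmetric] NN_def[symmetric] V_def[symmetric] by linarith
qed

end


context soe begin

lemma PD_prob: "prob_space (PiM K (\<lambda>_. D))"
  by (rule prob_space_PiM) (use D_prob in auto)

lemma PD_pps: "product_prob_space (\<lambda>_::nat \<times> nat. D)"
  unfolding product_prob_space_def product_prob_space_axioms_def product_sigma_finite_def
  using D_prob prob_space_imp_sigma_finite by auto

lemma Gz_meas[measurable]: "(\<lambda>s. G z s) \<in> borel_measurable D"
  using G_comp_meas[of "\<lambda>_. z" D "\<lambda>s. s"] by simp

lemma comp_distr: "p \<in> K \<Longrightarrow> distr (PiM K (\<lambda>_. D)) D (\<lambda>y. y p) = D"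
  using distr_PiM_component[of K "\<lambda>_. D" p] D_prob by auto

lemma comp_nn:
  assumes p: "p \<in> K" and f: "f \<in> borel_measurable D"
  shows "(\<integral>\<^sup>+ y. f (y p) \<partial>PiM K (\<lambda>_. D)) = integral\<^sup>N D f"
proof -
  have "integral\<^sup>N D f = integral\<^sup>N (distr (PiM K (\<lambda>_. D)) D (\<lambda>y. y p)) f" by (simp add: comp_distr[OF p])
  also have "\<dots> = (\<integral>\<^sup>+ y. f (y p) \<partial>PiM K (\<lambda>_. D))"
    by (rule nn_integral_distr) (use p f in auto)
  finally show ?thesis by simp
qed

lemma comp_int:
  fixes f :: "'s \<Rightarrow> 'b::{banach, second_countable_topology}"
  assumes p: "p \<in> K" and f: "f \<in> borel_measurable D"
  shows "(\<integral> y. f (y p) \<partial>PiM K (\<lambda>_. D)) = integral\<^sup>L D f"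
proof -
  have "integral\<^sup>L D f = integral\<^sup>L (distr (PiM K (\<lambda>_. D)) D (\<lambda>y. y p)) f" by (simp add: comp_distr[OF p])
  also have "\<dots> = (\<integral> y. f (y p) \<partial>PiM K (\<lambda>_. D))"
    by (rule integral_distr) (use p f in auto)
  finally show ?thesis by simp
qed

lemma comp_integrable:
  fixes f :: "'s \<Rightarrow> 'b::{banach, second_countable_topology}"
  assumes p: "p \<in> K" and f: "integrable D f"
  shows "integrable (PiM K (\<lambda>_. D)) (\<lambda>y. f (y p))"
proof -
  have "integrable (distr (PiM K (\<lambda>_. D)) D (\<lambda>y. y p)) f" by (simp add: comp_distr[OF p] f)
  thus ?thesis by (subst (asm) integrable_distr_eq) (use p f in auto)
qed

lemma Gc_integrable: "z \<in> X \<Longrightarrow> integrable D (\<lambda>s. G z s - F z)"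
  using G_oracle D_prob by (auto intro!: Bochner_Integration.integrable_diff finite_measure.integrable_const prob_space.finite_measure)

lemma Gc_int0: "z \<in> X \<Longrightarrow> (\<integral>s. G z s - F z \<partial>D) = 0"
proof -
  assume z: "z \<in> X"
  interpret prob_space D by (rule D_prob)
  have "(\<integral>s. G z s - F z \<partial>D) = (\<integral>s. G z s \<partial>D) - (\<integral>s. F z \<partial>D)"
    using G_oracle z by (intro Bochner_Integration.integral_diff) auto
  thus ?thesis using G_oracle z by (simp add: prob_space)
qed

lemma e_sq:
  assumes z: "z \<in> X" and p: "p \<in> K"
  shows "integrable (PiM K (\<lambda>_. D)) (\<lambda>y. (norm (G z (y p) - F z))\<^sup>2)"
    and "(\<integral>y. (norm (G z (y p) - F z))\<^sup>2 \<partial>PiM K (\<lambda>_. D)) \<le> \<sigma>\<^sup>2"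
proof -
  have nn: "(\<integral>\<^sup>+ y. ennreal ((norm (G z (y p) - F z))\<^sup>2) \<partial>PiM K (\<lambda>_. D)) \<le> ennreal (\<sigma>\<^sup>2)"
    using comp_nn[OF p, of "\<lambda>s. ennreal ((norm (G z s - F z))\<^sup>2)"] G_oracle z by auto
  have m: "(\<lambda>y. (norm (G z (y p) - F z))\<^sup>2) \<in> borel_measurable (PiM K (\<lambda>_. D))"
    using p by (intro borel_measurable_power borel_measurable_norm borel_measurable_diff G_comp_meas) auto
  show i: "integrable (PiM K (\<lambda>_. D)) (\<lambda>y. (norm (G z (y p) - F z))\<^sup>2)"
    by (rule integrableI_nonneg[OF m]) (auto intro: order.strict_trans1[OF nn])
  have "ennreal (\<integral>y. (norm (G z (y p) - F z))\<^sup>2 \<partial>PiM K (\<lambda>_. D)) \<le> ennreal (\<sigma>\<^sup>2)"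
    using nn nn_integral_eq_integral[OF i] by simp
  thus "(\<integral>y. (norm (G z (y p) - F z))\<^sup>2 \<partial>PiM K (\<lambda>_. D)) \<le> \<sigma>\<^sup>2"
    by (simp add: ennreal_le_iff)
qed

lemma ab_le: "0 \<le> a \<Longrightarrow> 0 \<le> b \<Longrightarrow> (a::real) * b \<le> a\<^sup>2 + b\<^sup>2"
proof -
  assume a: "0 \<le> a" and b: "0 \<le> b"
  have "0 \<le> (a - b)\<^sup>2" by simp
  moreover have "0 \<le> a * b" using a b by simp
  ultimately show ?thesis by (simp add: power2_eq_square algebra_simps)
qed

lemma cross_zero:
  fixes K :: "(nat \<times> nat) set"
  assumes z: "z \<in> X" and fin: "finite K" and p: "p \<in> K" and q: "q \<in> K" and pq: "p \<noteq> q"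
  shows "integrable (PiM K (\<lambda>_. D)) (\<lambda>y. inner (G z (y p) - F z) (G z (y q) - F z))"
    and "(\<integral>y. inner (G z (y p) - F z) (G z (y q) - F z) \<partial>PiM K (\<lambda>_. D)) = 0"
proof -
  interpret PP: product_prob_space "\<lambda>_::nat \<times> nat. D" by (rule PD_pps)
  let ?f = "\<lambda>y. inner (G z (y p) - F z) (G z (y q) - F z)"
  have mf: "?f \<in> borel_measurable (PiM K' (\<lambda>_. D))" if "p \<in> K'" "q \<in> K'" for K'
    using that by (intro borel_measurable_inner borel_measurable_diff G_comp_meas) auto
  show int: "integrable (PiM K (\<lambda>_. D)) ?f"
  proof (rule Bochner_Integration.integrable_bound[OF _ mf[OF p q]])
    show "integrable (PiM K (\<lambda>_. D)) (\<lambda>y. (norm (G z (y p) - F z))\<^sup>2 + (norm (G z (y q) - F z))\<^sup>2)"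
      using e_sq(1)[OF z p] e_sq(1)[OF z q] by auto
    show "AE y in PiM K (\<lambda>_. D). norm (?f y) \<le> norm ((norm (G z (y p) - F z))\<^sup>2 + (norm (G z (y q) - F z))\<^sup>2)"
    proof (intro AE_I2)
      fix y
      let ?a = "G z (y p) - F z" and ?b = "G z (y q) - F z"
      have "\<bar>inner ?a ?b\<bar> \<le> norm ?a * norm ?b" by (rule Cauchy_Schwarz_ineq2)
      also have "\<dots> \<le> (norm ?a)\<^sup>2 + (norm ?b)\<^sup>2"
        by (rule ab_le) auto
      finally show "norm (?f y) \<le> norm ((norm ?a)\<^sup>2 + (norm ?b)\<^sup>2)" by simp
    qed
  qed
  define J where "J = K - {q}"
  have KJ: "K = J \<union> {q}" using q unfolding J_def by auto
  have JQ: "J \<inter> {q} = {}" unfolding J_def by auto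
  have pJ: "p \<in> J" using p pq unfolding J_def by auto
  have "(\<integral>y. ?f y \<partial>PiM K (\<lambda>_. D)) = (\<integral>x. (\<integral>y. ?f (merge J {q} (x, y)) \<partial>PiM {q} (\<lambda>_. D)) \<partial>PiM J (\<lambda>_. D))"
  proof -
    have fJ: "finite J" using fin unfolding J_def by auto
    have iJ: "integrable (PiM (J \<union> {q}) (\<lambda>_. D)) ?f" using int KJ by simp
    show ?thesis unfolding KJ by (rule PP.product_integral_fold[OF JQ fJ _ iJ]) simp
  qed
  also have "\<dots> = (\<integral>x. 0 \<partial>PiM J (\<lambda>_. D))"
  proof (rule Bochner_Integration.integral_cong[OF refl])
    fix x
    have "(\<integral>y. ?f (merge J {q} (x, y)) \<partial>PiM {q} (\<lambda>_. D)) = (\<integral>y. inner (G z (x p) - F z) (G z (y q) - F z) \<partial>PiM {q} (\<lambda>_. D))"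
      using JQ pJ by (intro Bochner_Integration.integral_cong) auto
    also have "\<dots> = inner (G z (x p) - F z) (\<integral>y. G z (y q) - F z \<partial>PiM {q} (\<lambda>_. D))"
      by (rule integral_inner_right) (intro comp_integrable Gc_integrable z, simp)
    also have "(\<integral>y. G z (y q) - F z \<partial>PiM {q} (\<lambda>_. D)) = (\<integral>s. G z s - F z \<partial>D)"
      by (rule comp_int[of q "{q}" "\<lambda>s. G z s - F z"]) auto
    also have "\<dots> = 0" using Gc_int0[OF z] .
    finally show "(\<integral>y. ?f (merge J {q} (x, y)) \<partial>PiM {q} (\<lambda>_. D)) = 0" by simp
  qed
  finally show "(\<integral>y. ?f y \<partial>PiM K (\<lambda>_. D)) = 0" by simp
qed

lemma var_bound:
  fixes K :: "(nat \<times> nat) set"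
  assumes z: "z \<in> X" and fin: "finite K" and B: "{t} \<times> {..<m} \<subseteq> K"
  shows "(\<integral>\<^sup>+ y. ennreal ((norm ((1 / real m) *\<^sub>R (\<Sum>i<m. G z (y (t, i))) - F z))\<^sup>2) \<partial>PiM K (\<lambda>_. D))
          \<le> ennreal (\<sigma>\<^sup>2 / real m)"
proof -
  let ?Q = "PiM K (\<lambda>_. D)"
  define e where "e i y = G z (y (t, i)) - F z" for i :: nat and y
  define S where "S y = (\<Sum>i<m. e i y)" for y
  have tiK: "i < m \<Longrightarrow> (t, i) \<in> K" for i using B by auto
  have eq1: "(1 / real m) *\<^sub>R (\<Sum>i<m. G z (y (t, i))) - F z = (1 / real m) *\<^sub>R S y" for y
  proof -
    have "S y = (\<Sum>i<m. G z (y (t, i))) - real m *\<^sub>R F z" unfolding S_def e_def by (simp add: sum_subtractf sum_constant_scaleR)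
    hence "(\<Sum>i<m. G z (y (t, i))) = S y + real m *\<^sub>R F z" by simp
    hence "(1 / real m) *\<^sub>R (\<Sum>i<m. G z (y (t, i))) = (1 / real m) *\<^sub>R S y + F z"
      using m_pos by (simp add: scaleR_add_right)
    thus ?thesis by simp
  qed
  have sqS: "(norm (S y))\<^sup>2 = (\<Sum>i<m. \<Sum>j<m. inner (e i y) (e j y))" for y
    unfolding S_def power2_norm_eq_inner by (subst inner_sum_left) (simp add: inner_sum_right)
  have intij: "integrable ?Q (\<lambda>y. inner (e i y) (e j y))" if "i < m" "j < m" for i j
  proof (cases "i = j")
    case True
    thus ?thesis using e_sq(1)[OF z tiK[OF that(1)]] unfolding e_def by (simp add: power2_norm_eq_inner)
  next
    case False
    thus ?thesis using cross_zero(1)[OF z fin tiK[OF that(1)] tiK[OF that(2)]] unfolding e_def by auto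
  qed
  have intval: "(\<integral>y. inner (e i y) (e j y) \<partial>?Q) = (if j = i then (\<integral>y. (norm (e i y))\<^sup>2 \<partial>?Q) else 0)"
    if "i < m" "j < m" for i j
  proof (cases "i = j")
    case True
    thus ?thesis by (simp add: power2_norm_eq_inner)
  next
    case False
    thus ?thesis using cross_zero(2)[OF z fin tiK[OF that(1)] tiK[OF that(2)]] unfolding e_def by auto
  qed
  have intS: "integrable ?Q (\<lambda>y. (norm (S y))\<^sup>2)" unfolding sqS
    by (intro Bochner_Integration.integrable_sum intij) auto
  have "(\<integral>y. (norm (S y))\<^sup>2 \<partial>?Q) = (\<Sum>i<m. \<Sum>j<m. (\<integral>y. inner (e i y) (e j y) \<partial>?Q))"
    unfolding sqS
  proof (subst Bochner_Integration.integral_sum)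
    show "\<And>i. i \<in> {..<m} \<Longrightarrow> integrable ?Q (\<lambda>y. \<Sum>j<m. inner (e i y) (e j y))"
      by (intro Bochner_Integration.integrable_sum intij) auto
    show "(\<Sum>i<m. \<integral>y. (\<Sum>j<m. inner (e i y) (e j y)) \<partial>?Q) = (\<Sum>i<m. \<Sum>j<m. (\<integral>y. inner (e i y) (e j y) \<partial>?Q))"
      by (intro sum.cong refl Bochner_Integration.integral_sum intij) auto
  qed
  also have "\<dots> = (\<Sum>i<m. (\<integral>y. (norm (e i y))\<^sup>2 \<partial>?Q))"
    by (rule sum.cong[OF refl]) (simp add: intval)
  also have "\<dots> \<le> (\<Sum>i<m. \<sigma>\<^sup>2)"
    by (rule sum_mono) (use e_sq(2)[OF z tiK] in \<open>auto simp: e_def\<close>)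
  finally have bS: "(\<integral>y. (norm (S y))\<^sup>2 \<partial>?Q) \<le> real m * \<sigma>\<^sup>2" by simp
  have "(\<integral>\<^sup>+ y. ennreal ((norm ((1 / real m) *\<^sub>R (\<Sum>i<m. G z (y (t, i))) - F z))\<^sup>2) \<partial>?Q)
      = (\<integral>\<^sup>+ y. ennreal ((1 / real m)\<^sup>2 * (norm (S y))\<^sup>2) \<partial>?Q)"
    unfolding eq1 by (simp add: power_divide)
  also have "\<dots> = ennreal (\<integral>y. (1 / real m)\<^sup>2 * (norm (S y))\<^sup>2 \<partial>?Q)"
    by (rule nn_integral_eq_integral) (use intS in auto)
  also have "\<dots> \<le> ennreal (\<sigma>\<^sup>2 / real m)"
  proof (rule ennreal_leI)
    have "(\<integral>y. (1 / real m)\<^sup>2 * (norm (S y))\<^sup>2 \<partial>?Q) = (1 / real m)\<^sup>2 * (\<integral>y. (norm (S y))\<^sup>2 \<partial>?Q)" by simp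
    also have "\<dots> \<le> (1 / real m)\<^sup>2 * (real m * \<sigma>\<^sup>2)" using bS by (intro mult_left_mono) auto
    also have "\<dots> = \<sigma>\<^sup>2 / real m" using m_pos by (simp add: power2_eq_square field_simps)
    finally show "(\<integral>y. (1 / real m)\<^sup>2 * (norm (S y))\<^sup>2 \<partial>?Q) \<le> \<sigma>\<^sup>2 / real m" .
  qed
  finally show ?thesis .
qed

lemma batch_mean0:
  fixes K :: "(nat \<times> nat) set"
  assumes z: "z \<in> X" and B: "{t} \<times> {..<m} \<subseteq> K"
  shows "integrable (PiM K (\<lambda>_. D)) (\<lambda>y. (1 / real m) *\<^sub>R (\<Sum>i<m. G z (y (t, i))) - F z)"
    and "(\<integral>y. (1 / real m) *\<^sub>R (\<Sum>i<m. G z (y (t, i))) - F z \<partial>PiM K (\<lambda>_. D)) = 0"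
proof -
  interpret Q: prob_space "PiM K (\<lambda>_. D)" by (rule PD_prob)
  have tiK: "i < m \<Longrightarrow> (t, i) \<in> K" for i using B by auto
  have ii: "i < m \<Longrightarrow> integrable (PiM K (\<lambda>_. D)) (\<lambda>y. G z (y (t, i)))" for i
    using comp_integrable[OF tiK, of i "G z"] G_oracle z by auto
  have isum: "integrable (PiM K (\<lambda>_. D)) (\<lambda>y. \<Sum>i<m. G z (y (t, i)))"
    using ii by (intro Bochner_Integration.integrable_sum) auto
  hence isc: "integrable (PiM K (\<lambda>_. D)) (\<lambda>y. (1 / real m) *\<^sub>R (\<Sum>i<m. G z (y (t, i))))"
    by (rule Bochner_Integration.integrable_scaleR_right)
  show "integrable (PiM K (\<lambda>_. D)) (\<lambda>y. (1 / real m) *\<^sub>R (\<Sum>i<m. G z (y (t, i))) - F z)"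
    using isc by (intro Bochner_Integration.integrable_diff Q.integrable_const)
  have "(\<integral>y. (1 / real m) *\<^sub>R (\<Sum>i<m. G z (y (t, i))) - F z \<partial>PiM K (\<lambda>_. D))
      = (1 / real m) *\<^sub>R (\<Sum>i<m. (\<integral>y. G z (y (t, i)) \<partial>PiM K (\<lambda>_. D))) - F z"
    using ii isc by (subst Bochner_Integration.integral_diff) (auto intro!: Bochner_Integration.integral_sum simp: Q.prob_space)
  also have "(\<Sum>i<m. (\<integral>y. G z (y (t, i)) \<partial>PiM K (\<lambda>_. D))) = (\<Sum>i<m. F z)"
    by (intro sum.cong refl) (use comp_int[OF tiK, of _ "G z"] G_oracle z in auto)
  also have "(1 / real m) *\<^sub>R (\<Sum>i<m. F z) - F z = 0"
    using m_pos by (simp add: sum_constant_scaleR)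
  finally show "(\<integral>y. (1 / real m) *\<^sub>R (\<Sum>i<m. G z (y (t, i))) - F z \<partial>PiM K (\<lambda>_. D)) = 0" .
qed

lemma est_merge:
  assumes JB: "J \<inter> {t} \<times> {..<m} = {}"
  shows "est z t (merge J ({t} \<times> {..<m}) (x, y)) = (1 / real m) *\<^sub>R (\<Sum>i<m. G z (y (t, i)))"
  unfolding est_def using JB by (intro arg_cong[where f="\<lambda>v. _ *\<^sub>R v"] sum.cong refl) auto

lemma psi_merge:
  assumes dep: "\<And>\<xi> \<xi>'. (\<forall>p\<in>J. \<xi> p = \<xi>' p) \<Longrightarrow> \<psi> \<xi> = \<psi> \<xi>'" and JB: "J \<inter> B = {}"
  shows "\<psi> (merge J B (x, y)) = \<psi> x"
  using JB by (intro dep) auto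

lemma delta_sq:
  fixes K :: "(nat \<times> nat) set" and \<psi> :: "(nat \<times> nat \<Rightarrow> 's) \<Rightarrow> 'a"
  assumes fin: "finite K" and B: "{t} \<times> {..<m} \<subseteq> K"
    and mK: "\<psi> \<in> borel_measurable (PiM K (\<lambda>_. D))"
    and mJ: "\<psi> \<in> borel_measurable (PiM (K - {t} \<times> {..<m}) (\<lambda>_. D))"
    and inX: "\<And>\<xi>. \<psi> \<xi> \<in> X"
    and dep: "\<And>\<xi> \<xi>'. (\<forall>p\<in>K - {t} \<times> {..<m}. \<xi> p = \<xi>' p) \<Longrightarrow> \<psi> \<xi> = \<psi> \<xi>'"
  shows "(\<integral>\<^sup>+\<xi>. ennreal ((norm (est (\<psi> \<xi>) t \<xi> - F (\<psi> \<xi>)))\<^sup>2) \<partial>PiM K (\<lambda>_. D)) \<le> ennreal (\<sigma>\<^sup>2 / real m)"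
proof -
  interpret PP: product_prob_space "\<lambda>_::nat \<times> nat. D" by (rule PD_pps)
  define B' where "B' = {t} \<times> {..<m}"
  define J where "J = K - B'"
  have KJ: "K = J \<union> B'" using B unfolding J_def B'_def by auto
  have JB: "J \<inter> B' = {}" unfolding J_def by auto
  have fJ: "finite J" and fB: "finite B'" using fin B unfolding J_def B'_def by auto
  let ?f = "\<lambda>\<xi>. ennreal ((norm (est (\<psi> \<xi>) t \<xi> - Fc (\<psi> \<xi>)))\<^sup>2)"
  have eqF: "F (\<psi> \<xi>) = Fc (\<psi> \<xi>)" for \<xi> using Fc_eq[OF inX] by simp
  have mf: "?f \<in> borel_measurable (PiM (J \<union> B') (\<lambda>_. D))"
  proof -
    have e: "(\<lambda>\<xi>. est (\<psi> \<xi>) t \<xi>) \<in> borel_measurable (PiM K (\<lambda>_. D))"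
      by (rule est_meas[OF mK]) (use B in auto)
    have f: "(\<lambda>\<xi>. Fc (\<psi> \<xi>)) \<in> borel_measurable (PiM K (\<lambda>_. D))"
      using measurable_compose[OF mK Fc_meas] .
    note [measurable] = e f
    show ?thesis unfolding KJ[symmetric] by measurable
  qed
  have "(\<integral>\<^sup>+\<xi>. ?f \<xi> \<partial>PiM K (\<lambda>_. D)) = (\<integral>\<^sup>+ x. (\<integral>\<^sup>+ y. ?f (merge J B' (x, y)) \<partial>PiM B' (\<lambda>_. D)) \<partial>PiM J (\<lambda>_. D))"
    unfolding KJ by (rule PP.product_nn_integral_fold[OF JB fJ fB mf])
  also have "\<dots> \<le> (\<integral>\<^sup>+ x. ennreal (\<sigma>\<^sup>2 / real m) \<partial>PiM J (\<lambda>_. D))"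
  proof (rule nn_integral_mono)
    fix x
    have "(\<integral>\<^sup>+ y. ?f (merge J B' (x, y)) \<partial>PiM B' (\<lambda>_. D))
        = (\<integral>\<^sup>+ y. ennreal ((norm ((1 / real m) *\<^sub>R (\<Sum>i<m. G (\<psi> x) (y (t, i))) - F (\<psi> x)))\<^sup>2) \<partial>PiM B' (\<lambda>_. D))"
      using psi_merge[of J \<psi> B' x, OF dep[unfolded J_def[symmetric] B'_def[symmetric]] JB]
        est_merge[of J] JB eqF unfolding B'_def by simp
    also have "\<dots> \<le> ennreal (\<sigma>\<^sup>2 / real m)"
      by (rule var_bound[OF inX fB]) (simp add: B'_def)
    finally show "(\<integral>\<^sup>+ y. ?f (merge J B' (x, y)) \<partial>PiM B' (\<lambda>_. D)) \<le> ennreal (\<sigma>\<^sup>2 / real m)" .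
  qed
  also have "\<dots> = ennreal (\<sigma>\<^sup>2 / real m)"
  proof -
    interpret prob_space "PiM J (\<lambda>_. D)" by (rule PD_prob)
    show ?thesis by (simp add: emeasure_space_1)
  qed
  finally show ?thesis using eqF by simp
qed

lemma le_1_sq: "(a::real) \<le> 1 + a\<^sup>2"
proof -
  have "0 \<le> (a - 1/2)\<^sup>2" by simp
  thus ?thesis by (simp add: power2_eq_square algebra_simps)
qed

lemma delta_inner:
  fixes K :: "(nat \<times> nat) set" and \<psi> :: "(nat \<times> nat \<Rightarrow> 's) \<Rightarrow> 'a"
  assumes fin: "finite K" and B: "{t} \<times> {..<m} \<subseteq> K"
    and mK: "\<psi> \<in> borel_measurable (PiM K (\<lambda>_. D))"
    and mJ: "\<psi> \<in> borel_measurable (PiM (K - {t} \<times> {..<m}) (\<lambda>_. D))"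
    and inX: "\<And>\<xi>. \<psi> \<xi> \<in> X"
    and dep: "\<And>\<xi> \<xi>'. (\<forall>p\<in>K - {t} \<times> {..<m}. \<xi> p = \<xi>' p) \<Longrightarrow> \<psi> \<xi> = \<psi> \<xi>'"
    and fin1: "(\<integral>\<^sup>+ x. ennreal (norm (\<psi> x - xs)) \<partial>PiM (K - {t} \<times> {..<m}) (\<lambda>_. D)) < \<infinity>"
  shows "integrable (PiM K (\<lambda>_. D)) (\<lambda>\<xi>. inner (est (\<psi> \<xi>) t \<xi> - F (\<psi> \<xi>)) (\<psi> \<xi> - xs))"
    and "(\<integral>\<xi>. inner (est (\<psi> \<xi>) t \<xi> - F (\<psi> \<xi>)) (\<psi> \<xi> - xs) \<partial>PiM K (\<lambda>_. D)) = 0"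
proof -
  interpret PP: product_prob_space "\<lambda>_::nat \<times> nat. D" by (rule PD_pps)
  define B' where "B' = {t} \<times> {..<m}"
  define J where "J = K - B'"
  have KJ: "K = J \<union> B'" using B unfolding J_def B'_def by auto
  have JB: "J \<inter> B' = {}" unfolding J_def by auto
  have fJ: "finite J" and fB: "finite B'" using fin B unfolding J_def B'_def by auto
  have eqF: "F (\<psi> \<xi>) = Fc (\<psi> \<xi>)" for \<xi> using Fc_eq[OF inX] by simp
  have e: "(\<lambda>\<xi>. est (\<psi> \<xi>) t \<xi>) \<in> borel_measurable (PiM K (\<lambda>_. D))"
    by (rule est_meas[OF mK]) (use B in auto)
  have f: "(\<lambda>\<xi>. Fc (\<psi> \<xi>)) \<in> borel_measurable (PiM K (\<lambda>_. D))"
    using measurable_compose[OF mK Fc_meas] .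
  note [measurable] = e f mK
  let ?h = "\<lambda>\<xi>. inner (est (\<psi> \<xi>) t \<xi> - Fc (\<psi> \<xi>)) (\<psi> \<xi> - xs)"
  let ?g = "\<lambda>\<xi>. ennreal (norm (est (\<psi> \<xi>) t \<xi> - Fc (\<psi> \<xi>)) * norm (\<psi> \<xi> - xs))"
  have mh: "?h \<in> borel_measurable (PiM K (\<lambda>_. D))" by measurable
  have mg: "?g \<in> borel_measurable (PiM (J \<union> B') (\<lambda>_. D))" unfolding KJ[symmetric] by measurable
  have merge_eq: "\<psi> (merge J B' (x, y)) = \<psi> x" for x y
    using psi_merge[of J \<psi> B' x, OF dep[unfolded J_def[symmetric] B'_def[symmetric]] JB] .
  have est_eq: "est z t (merge J B' (x, y)) = (1 / real m) *\<^sub>R (\<Sum>i<m. G z (y (t, i)))" for z x y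
    using est_merge[of J t z x y] JB unfolding B'_def by simp
  define C where "C = 1 + \<sigma>\<^sup>2 / real m"
  have inner_nn: "(\<integral>\<^sup>+ y. ennreal (norm ((1 / real m) *\<^sub>R (\<Sum>i<m. G z (y (t, i))) - Fc z)) \<partial>PiM B' (\<lambda>_. D)) \<le> ennreal C"
    if z: "z \<in> X" for z
  proof -
    interpret Q: prob_space "PiM B' (\<lambda>_. D)" by (rule PD_prob)
    let ?d = "\<lambda>y. norm ((1 / real m) *\<^sub>R (\<Sum>i<m. G z (y (t, i))) - Fc z)"
    have md: "?d \<in> borel_measurable (PiM B' (\<lambda>_. D))"
    proof -
      have "(\<lambda>y. G z (y (t, i))) \<in> borel_measurable (PiM B' (\<lambda>_. D))" if "i < m" for i
        using that by (intro G_comp_meas) (auto simp: B'_def)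
      note [measurable] = this
      show ?thesis by measurable
    qed
    have "(\<integral>\<^sup>+ y. ennreal (?d y) \<partial>PiM B' (\<lambda>_. D)) \<le> (\<integral>\<^sup>+ y. 1 + ennreal ((?d y)\<^sup>2) \<partial>PiM B' (\<lambda>_. D))"
    proof (rule nn_integral_mono)
      fix y
      have "ennreal (?d y) \<le> ennreal (1 + (?d y)\<^sup>2)" by (rule ennreal_leI) (rule le_1_sq)
      thus "ennreal (?d y) \<le> 1 + ennreal ((?d y)\<^sup>2)" by (simp add: ennreal_plus)
    qed
    also have "\<dots> = 1 + (\<integral>\<^sup>+ y. ennreal ((?d y)\<^sup>2) \<partial>PiM B' (\<lambda>_. D))"
      using md by (subst nn_integral_add) (auto simp: Q.emeasure_space_1)
    also have "\<dots> \<le> 1 + ennreal (\<sigma>\<^sup>2 / real m)"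
      using var_bound[OF z fB, of t] Fc_eq[OF z] by (auto simp: B'_def intro: add_left_mono)
    also have "\<dots> = ennreal C" unfolding C_def by (simp add: ennreal_plus)
    finally show ?thesis .
  qed
  have "(\<integral>\<^sup>+ \<xi>. ennreal (norm (?h \<xi>)) \<partial>PiM K (\<lambda>_. D)) \<le> (\<integral>\<^sup>+ \<xi>. ?g \<xi> \<partial>PiM K (\<lambda>_. D))"
    by (intro nn_integral_mono ennreal_leI) (simp add: Cauchy_Schwarz_ineq2)
  also have "\<dots> = (\<integral>\<^sup>+ x. (\<integral>\<^sup>+ y. ?g (merge J B' (x, y)) \<partial>PiM B' (\<lambda>_. D)) \<partial>PiM J (\<lambda>_. D))"
    unfolding KJ by (rule PP.product_nn_integral_fold[OF JB fJ fB mg])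
  also have "\<dots> \<le> (\<integral>\<^sup>+ x. ennreal (norm (\<psi> x - xs)) * ennreal C \<partial>PiM J (\<lambda>_. D))"
  proof (rule nn_integral_mono)
    fix x
    have "(\<integral>\<^sup>+ y. ?g (merge J B' (x, y)) \<partial>PiM B' (\<lambda>_. D))
       = (\<integral>\<^sup>+ y. ennreal (norm ((1 / real m) *\<^sub>R (\<Sum>i<m. G (\<psi> x) (y (t, i))) - Fc (\<psi> x))) * ennreal (norm (\<psi> x - xs)) \<partial>PiM B' (\<lambda>_. D))"
      unfolding merge_eq est_eq by (simp add: ennreal_mult)
    also have "\<dots> = (\<integral>\<^sup>+ y. ennreal (norm ((1 / real m) *\<^sub>R (\<Sum>i<m. G (\<psi> x) (y (t, i))) - Fc (\<psi> x))) \<partial>PiM B' (\<lambda>_. D)) * ennreal (norm (\<psi> x - xs))"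
    proof (rule nn_integral_multc)
      have "(\<lambda>y. G (\<psi> x) (y (t, i))) \<in> borel_measurable (PiM B' (\<lambda>_. D))" if "i < m" for i
        using that by (intro G_comp_meas) (auto simp: B'_def)
      note [measurable] = this
      show "(\<lambda>y. ennreal (norm ((1 / real m) *\<^sub>R (\<Sum>i<m. G (\<psi> x) (y (t, i))) - Fc (\<psi> x)))) \<in> borel_measurable (PiM B' (\<lambda>_. D))"
        by measurable
    qed
    also have "\<dots> \<le> ennreal C * ennreal (norm (\<psi> x - xs))"
      by (intro mult_right_mono inner_nn inX) simp
    finally show "(\<integral>\<^sup>+ y. ?g (merge J B' (x, y)) \<partial>PiM B' (\<lambda>_. D)) \<le> ennreal (norm (\<psi> x - xs)) * ennreal C"
      by (simp add: mult.commute)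
  qed
  also have "\<dots> = (\<integral>\<^sup>+ x. ennreal (norm (\<psi> x - xs)) \<partial>PiM J (\<lambda>_. D)) * ennreal C"
  proof (rule nn_integral_multc)
    note [measurable] = mJ[folded B'_def, folded J_def]
    show "(\<lambda>x. ennreal (norm (\<psi> x - xs))) \<in> borel_measurable (PiM J (\<lambda>_. D))" by measurable
  qed
  also have "\<dots> < \<infinity>" using fin1 unfolding J_def B'_def by (simp add: ennreal_mult_less_top)
  finally have finh: "(\<integral>\<^sup>+ \<xi>. ennreal (norm (?h \<xi>)) \<partial>PiM K (\<lambda>_. D)) < \<infinity>" .
  have ih: "integrable (PiM K (\<lambda>_. D)) ?h" by (rule integrableI_bounded[OF mh finh])
  show "integrable (PiM K (\<lambda>_. D)) (\<lambda>\<xi>. inner (est (\<psi> \<xi>) t \<xi> - F (\<psi> \<xi>)) (\<psi> \<xi> - xs))"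
    using ih eqF by simp
  have "(\<integral>\<xi>. ?h \<xi> \<partial>PiM K (\<lambda>_. D)) = (\<integral>x. (\<integral>y. ?h (merge J B' (x, y)) \<partial>PiM B' (\<lambda>_. D)) \<partial>PiM J (\<lambda>_. D))"
    using ih unfolding KJ by (intro PP.product_integral_fold[OF JB fJ fB]) simp
  also have "\<dots> = (\<integral>x. 0 \<partial>PiM J (\<lambda>_. D))"
  proof (rule Bochner_Integration.integral_cong[OF refl])
    fix x
    have "(\<integral>y. ?h (merge J B' (x, y)) \<partial>PiM B' (\<lambda>_. D))
        = (\<integral>y. inner ((1 / real m) *\<^sub>R (\<Sum>i<m. G (\<psi> x) (y (t, i))) - F (\<psi> x)) (\<psi> x - xs) \<partial>PiM B' (\<lambda>_. D))"
      unfolding merge_eq est_eq using eqF by simp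
    also have "\<dots> = inner (\<integral>y. (1 / real m) *\<^sub>R (\<Sum>i<m. G (\<psi> x) (y (t, i))) - F (\<psi> x) \<partial>PiM B' (\<lambda>_. D)) (\<psi> x - xs)"
      by (rule integral_inner_left) (rule batch_mean0(1)[OF inX], simp add: B'_def)
    also have "\<dots> = 0" using batch_mean0(2)[OF inX, of t B'] by (simp add: B'_def)
    finally show "(\<integral>y. ?h (merge J B' (x, y)) \<partial>PiM B' (\<lambda>_. D)) = 0" .
  qed
  finally show "(\<integral>\<xi>. inner (est (\<psi> \<xi>) t \<xi> - F (\<psi> \<xi>)) (\<psi> \<xi> - xs) \<partial>PiM K (\<lambda>_. D)) = 0"
    using eqF by simp
qed

lemma prox_step: assumes a: "a \<in> X" shows "norm (prox a v - a) \<le> 2 * norm v"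
proof -
  define z where "z = prox a v"
  have m: "is_min a v z" unfolding z_def by (rule prox_is_min[OF a])
  hence z: "z \<in> X" and le: "inner v z + bregman w gw a z \<le> inner v a + bregman w gw a a"
    using a unfolding is_min_def by auto
  have "bregman w gw a a = 0" unfolding bregman_def by simp
  hence "(norm (z - a))\<^sup>2 / 2 \<le> inner v (a - z)" using le V_lower[OF a z] by (simp add: inner_simps)
  also have "\<dots> \<le> norm v * norm (z - a)"
    using norm_cauchy_schwarz[of v "a - z"] by (simp add: norm_minus_commute)
  finally have "(norm (z - a))\<^sup>2 \<le> 2 * norm v * norm (z - a)" by simp
  hence "norm (z - a) \<le> 2 * norm v"
    by (cases "norm (z - a) = 0") (auto simp: power2_eq_square)
  thus ?thesis unfolding z_def .
qed

lemma phi_dep_K: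
  "{1..<t} \<times> {..<m} \<subseteq> K' \<Longrightarrow> (\<forall>p\<in>K'. \<xi> p = \<xi>' p) \<Longrightarrow> phi gam lam t \<xi> = phi gam lam t \<xi>'"
  by (rule phi_dep) auto

lemma delta_sq_phi:
  fixes K :: "(nat \<times> nat) set"
  assumes fin: "finite K" and sub: "{1..t} \<times> {..<m} \<subseteq> K" and t1: "t \<ge> 1"
  shows "(\<integral>\<^sup>+\<xi>. ennreal ((norm (est (phi gam lam t \<xi>) t \<xi> - F (phi gam lam t \<xi>)))\<^sup>2) \<partial>PiM K (\<lambda>_. D)) \<le> ennreal (\<sigma>\<^sup>2 / real m)"
proof (rule delta_sq[OF fin])
  have s1: "{1..<t} \<times> {..<m} \<subseteq> K - {t} \<times> {..<m}" using sub by auto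
  show "{t} \<times> {..<m} \<subseteq> K" using sub t1 by auto
  show "phi gam lam t \<in> borel_measurable (PiM K (\<lambda>_. D))" by (rule phi_meas) (use sub in auto)
  show "phi gam lam t \<in> borel_measurable (PiM (K - {t} \<times> {..<m}) (\<lambda>_. D))" by (rule phi_meas[OF s1])
  show "\<And>\<xi>. phi gam lam t \<xi> \<in> X" by (rule phi_in)
  show "\<And>\<xi> \<xi>'. \<forall>p\<in>K - {t} \<times> {..<m}. \<xi> p = \<xi>' p \<Longrightarrow> phi gam lam t \<xi> = phi gam lam t \<xi>'"
    by (rule phi_dep_K[OF s1])
qed

lemma delta_sq_int:
  fixes K :: "(nat \<times> nat) set"
  assumes fin: "finite K" and sub: "{1..t} \<times> {..<m} \<subseteq> K" and t1: "t \<ge> 1"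
  shows "integrable (PiM K (\<lambda>_. D)) (\<lambda>\<xi>. (norm (est (phi gam lam t \<xi>) t \<xi> - F (phi gam lam t \<xi>)))\<^sup>2)"
    and "(\<integral>\<xi>. (norm (est (phi gam lam t \<xi>) t \<xi> - F (phi gam lam t \<xi>)))\<^sup>2 \<partial>PiM K (\<lambda>_. D)) \<le> \<sigma>\<^sup>2 / real m"
proof -
  have t: "{t} \<times> {..<m} \<subseteq> K" using sub t1 by auto
  have e: "(\<lambda>\<xi>. est (phi gam lam t \<xi>) t \<xi>) \<in> borel_measurable (PiM K (\<lambda>_. D))"
    by (rule est_meas[OF phi_meas]) (use sub t in auto)
  have f: "(\<lambda>\<xi>. Fc (phi gam lam t \<xi>)) \<in> borel_measurable (PiM K (\<lambda>_. D))"
    by (rule measurable_compose[OF phi_meas Fc_meas]) (use sub in auto)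
  have eqF: "F (phi gam lam t \<xi>) = Fc (phi gam lam t \<xi>)" for \<xi> using Fc_eq[OF phi_in] by simp
  note [measurable] = e f
  have m: "(\<lambda>\<xi>. (norm (est (phi gam lam t \<xi>) t \<xi> - F (phi gam lam t \<xi>)))\<^sup>2) \<in> borel_measurable (PiM K (\<lambda>_. D))"
    unfolding eqF by measurable
  note nn = delta_sq_phi[OF fin sub t1, of gam lam]
  show i: "integrable (PiM K (\<lambda>_. D)) (\<lambda>\<xi>. (norm (est (phi gam lam t \<xi>) t \<xi> - F (phi gam lam t \<xi>)))\<^sup>2)"
    by (rule integrableI_nonneg[OF m]) (auto intro: order.strict_trans1[OF nn])
  have "ennreal (\<integral>\<xi>. (norm (est (phi gam lam t \<xi>) t \<xi> - F (phi gam lam t \<xi>)))\<^sup>2 \<partial>PiM K (\<lambda>_. D)) \<le> ennreal (\<sigma>\<^sup>2 / real m)"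
    using nn nn_integral_eq_integral[OF i] by simp
  thus "(\<integral>\<xi>. (norm (est (phi gam lam t \<xi>) t \<xi> - F (phi gam lam t \<xi>)))\<^sup>2 \<partial>PiM K (\<lambda>_. D)) \<le> \<sigma>\<^sup>2 / real m"
    by (simp add: ennreal_le_iff)
qed

lemma v_bound: "norm (c *\<^sub>R (x + l *\<^sub>R (x - y))) \<le> \<bar>c\<bar> * ((1 + \<bar>l\<bar>) * norm x + \<bar>l\<bar> * norm (y::'a))"
proof -
  have "norm (x + l *\<^sub>R (x - y)) \<le> norm x + \<bar>l\<bar> * norm (x - y)"
    using norm_triangle_ineq[of x "l *\<^sub>R (x - y)"] by simp
  also have "\<dots> \<le> norm x + \<bar>l\<bar> * (norm x + norm y)"
    by (intro add_left_mono mult_left_mono norm_triangle_ineq4) auto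
  finally have "norm (x + l *\<^sub>R (x - y)) \<le> (1 + \<bar>l\<bar>) * norm x + \<bar>l\<bar> * norm y"
    by (simp add: algebra_simps)
  thus ?thesis by (simp add: mult_left_mono)
qed

lemma F_bound: assumes a: "a \<in> X"
  shows "norm e \<le> 1 + norm (F xs) + L * norm (a - xs) + (norm (e - F a))\<^sup>2"
proof -
  have "norm e \<le> norm (e - F a) + norm (F a)" using norm_triangle_ineq[of "e - F a" "F a"] by simp
  moreover have "norm (F a) \<le> norm (F xs) + L * norm (a - xs)"
    using norm_triangle_ineq[of "F xs" "F a - F xs"] F_lipD[OF a xs_in] by simp
  moreover have "norm (e - F a) \<le> 1 + (norm (e - F a))\<^sup>2" by (rule le_1_sq)
  ultimately show ?thesis by linarith
qed

lemma phi_moment: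
  fixes K :: "(nat \<times> nat) set"
  assumes fin: "finite K"
  shows "{1..<t} \<times> {..<m} \<subseteq> K \<Longrightarrow> integrable (PiM K (\<lambda>_. D)) (\<lambda>\<xi>. norm (phi gam lam t \<xi> - xs))"
proof (induction t rule: less_induct)
  case (less t)
  interpret Q: prob_space "PiM K (\<lambda>_. D)" by (rule PD_prob)
  have "t \<le> 1 \<or> (\<exists>s. t = Suc (Suc s))" by presburger
  moreover
  { assume "t \<le> 1"
    hence "(\<lambda>\<xi>. norm (phi gam lam t \<xi> - xs)) = (\<lambda>_. norm (x1 - xs))"
      by (cases t) (auto simp: fun_eq_iff)
    hence ?case by simp }
  moreover
  { fix s assume ts: "t = Suc (Suc s)"
    let ?a = "\<lambda>\<xi>. phi gam lam (Suc s) \<xi>"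
    let ?Ft = "\<lambda>\<xi>. est (?a \<xi>) (Suc s) \<xi>"
    let ?d1 = "\<lambda>\<xi>. (norm (?Ft \<xi> - F (?a \<xi>)))\<^sup>2"
    let ?c = "\<bar>gam (Suc s)\<bar>" and ?l = "\<bar>lam (Suc s)\<bar>"
    let ?A = "\<lambda>\<xi>. 1 + norm (F xs) + L * norm (?a \<xi> - xs) + ?d1 \<xi>"
    have sub1: "{1..<Suc s} \<times> {..<m} \<subseteq> K" using less.prems ts by auto
    have IH1: "integrable (PiM K (\<lambda>_. D)) (\<lambda>\<xi>. norm (?a \<xi> - xs))"
      using less.IH[of "Suc s"] sub1 ts by auto
    have D1: "integrable (PiM K (\<lambda>_. D)) ?d1"
      by (rule delta_sq_int(1)[OF fin]) (use less.prems ts in auto)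
    have iA: "integrable (PiM K (\<lambda>_. D)) ?A" using IH1 D1 by auto
    have aX: "?a \<xi> \<in> X" for \<xi> by (rule phi_in)
    have FtB: "norm (?Ft \<xi>) \<le> ?A \<xi>" for \<xi> by (rule F_bound[OF aX])
    have mt: "(\<lambda>\<xi>. norm (phi gam lam t \<xi> - xs)) \<in> borel_measurable (PiM K (\<lambda>_. D))"
    proof -
      have "phi gam lam t \<in> borel_measurable (PiM K (\<lambda>_. D))" by (rule phi_meas[OF less.prems])
      note [measurable] = this
      show ?thesis by measurable
    qed
    have step: "norm (phi gam lam t \<xi> - xs) \<le> norm (?a \<xi> - xs) + 2 * (?c * ((1 + ?l) * norm (?Ft \<xi>) + ?l * norm (Fp \<xi>)))"
      if Fp: "phi gam lam t \<xi> = Pc (?a \<xi>) (gam (Suc s) *\<^sub>R (?Ft \<xi> + lam (Suc s) *\<^sub>R (?Ft \<xi> - Fp \<xi>)))" for \<xi> Fp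
    proof -
      let ?v = "gam (Suc s) *\<^sub>R (?Ft \<xi> + lam (Suc s) *\<^sub>R (?Ft \<xi> - Fp \<xi>))"
      have eq: "phi gam lam t \<xi> = prox (?a \<xi>) ?v" using Fp Pc_eq[OF aX] by simp
      have "norm (phi gam lam t \<xi> - ?a \<xi>) \<le> 2 * norm ?v" unfolding eq by (rule prox_step[OF aX])
      moreover have "norm ?v \<le> ?c * ((1 + ?l) * norm (?Ft \<xi>) + ?l * norm (Fp \<xi>))" by (rule v_bound)
      moreover have "norm (phi gam lam t \<xi> - xs) \<le> norm (phi gam lam t \<xi> - ?a \<xi>) + norm (?a \<xi> - xs)"
        using norm_triangle_ineq[of "phi gam lam t \<xi> - ?a \<xi>" "?a \<xi> - xs"] by simp
      ultimately show ?thesis by linarith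
    qed
    have ?case
    proof (cases "s = 0")
      case True
      let ?bnd = "\<lambda>\<xi>. norm (?a \<xi> - xs) + 2 * (?c * ((1 + ?l) * ?A \<xi> + ?l * ?A \<xi>))"
      have ib: "integrable (PiM K (\<lambda>_. D)) ?bnd" using iA IH1 by auto
      show ?thesis
      proof (rule Bochner_Integration.integrable_bound[OF ib mt], intro AE_I2)
        fix \<xi>
        have "phi gam lam t \<xi> = Pc (?a \<xi>) (gam (Suc s) *\<^sub>R (?Ft \<xi> + lam (Suc s) *\<^sub>R (?Ft \<xi> - ?Ft \<xi>)))"
          using ts True by (simp add: Let_def)
        from step[of \<xi> ?Ft, OF this] have "norm (phi gam lam t \<xi> - xs) \<le> norm (?a \<xi> - xs) + 2 * (?c * ((1 + ?l) * norm (?Ft \<xi>) + ?l * norm (?Ft \<xi>)))" .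
        also have "\<dots> \<le> ?bnd \<xi>"
          using FtB[of \<xi>] by (intro add_left_mono mult_left_mono add_mono) auto
        finally have "norm (phi gam lam t \<xi> - xs) \<le> ?bnd \<xi>" .
        moreover have "?bnd \<xi> \<ge> 0" using FtB[of \<xi>] L_pos by (intro add_nonneg_nonneg mult_nonneg_nonneg) auto
        ultimately show "norm (norm (phi gam lam t \<xi> - xs)) \<le> norm (?bnd \<xi>)" by simp
      qed
    next
      case False
      let ?b = "\<lambda>\<xi>. phi gam lam s \<xi>"
      let ?Fp = "\<lambda>\<xi>. est (?b \<xi>) s \<xi>"
      let ?d0 = "\<lambda>\<xi>. (norm (?Fp \<xi> - F (?b \<xi>)))\<^sup>2"
      let ?P = "\<lambda>\<xi>. 1 + norm (F xs) + L * norm (?b \<xi> - xs) + ?d0 \<xi>"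
      have IH0: "integrable (PiM K (\<lambda>_. D)) (\<lambda>\<xi>. norm (?b \<xi> - xs))"
      proof -
        have "{1..<s} \<times> {..<m} \<subseteq> K" using sub1 by auto
        thus ?thesis using less.IH[of s] ts by auto
      qed
      have D0: "integrable (PiM K (\<lambda>_. D)) ?d0"
        by (rule delta_sq_int(1)[OF fin]) (use less.prems ts False in auto)
      have iP: "integrable (PiM K (\<lambda>_. D)) ?P" using IH0 D0 by auto
      have FpB: "norm (?Fp \<xi>) \<le> ?P \<xi>" for \<xi> by (rule F_bound[OF phi_in])
      let ?bnd = "\<lambda>\<xi>. norm (?a \<xi> - xs) + 2 * (?c * ((1 + ?l) * ?A \<xi> + ?l * ?P \<xi>))"
      have ib: "integrable (PiM K (\<lambda>_. D)) ?bnd" using iA iP IH1 by auto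
      show ?thesis
      proof (rule Bochner_Integration.integrable_bound[OF ib mt], intro AE_I2)
        fix \<xi>
        have "phi gam lam t \<xi> = Pc (?a \<xi>) (gam (Suc s) *\<^sub>R (?Ft \<xi> + lam (Suc s) *\<^sub>R (?Ft \<xi> - ?Fp \<xi>)))"
          using ts False by (simp add: Let_def)
        from step[of \<xi> ?Fp, OF this] have "norm (phi gam lam t \<xi> - xs) \<le> norm (?a \<xi> - xs) + 2 * (?c * ((1 + ?l) * norm (?Ft \<xi>) + ?l * norm (?Fp \<xi>)))" .
        also have "\<dots> \<le> ?bnd \<xi>"
          using FtB[of \<xi>] FpB[of \<xi>] by (intro add_left_mono mult_left_mono add_mono) auto
        finally have "norm (phi gam lam t \<xi> - xs) \<le> ?bnd \<xi>" .
        moreover have "?bnd \<xi> \<ge> 0" using FtB[of \<xi>] FpB[of \<xi>] L_pos by (intro add_nonneg_nonneg mult_nonneg_nonneg) auto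
        ultimately show "norm (norm (phi gam lam t \<xi> - xs)) \<le> norm (?bnd \<xi>)" by simp
      qed
    qed }
  ultimately show ?case by blast
qed

end


context soe begin

lemma phi_step_min:
  assumes t: "t \<ge> 1"
  shows "is_min (phi gam lam t \<xi>) (gam t *\<^sub>R (est (phi gam lam t \<xi>) t \<xi> + lam t *\<^sub>R (est (phi gam lam t \<xi>) t \<xi> -
      (if t = 1 then est (phi gam lam 1 \<xi>) 1 \<xi> else est (phi gam lam (t - 1) \<xi>) (t - 1) \<xi>)))) (phi gam lam (Suc t) \<xi>)"
proof -
  obtain s where ts: "t = Suc s" using t by (cases t) auto
  have aX: "phi gam lam t \<xi> \<in> X" by (rule phi_in)
  show ?thesis
    using prox_is_min[OF aX] Pc_eq[OF aX] ts by (cases "s = 0") (auto simp: Let_def)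
qed

lemma part1_P:
  fixes gam lam \<theta> :: "nat \<Rightarrow> real" and k :: nat
  assumes nonneg: "\<forall>t. gam t \<ge> 0 \<and> lam t \<ge> 0 \<and> \<theta> t \<ge> 0"
    and cond: "\<forall>t\<in>{1..k}. \<theta> (t + 1) * gam (t + 1) * lam (t + 1) = gam t * \<theta> t \<and>
                     \<theta> (t - 1) \<ge> 16 * L\<^sup>2 * (gam t)\<^sup>2 * (lam t)\<^sup>2 * \<theta> t \<and> \<theta> t \<le> \<theta> (t - 1)"
    and last: "8 * L\<^sup>2 * (gam k)\<^sup>2 \<le> 1"
  shows "(\<Sum>t = 1..k. ennreal (\<theta> t / 8) *
            (\<integral>\<^sup>+ \<xi>. ennreal ((norm (phi gam lam (t + 1) \<xi> - phi gam lam t \<xi>))\<^sup>2) \<partial>PiM ({1..Suc k} \<times> {..<m}) (\<lambda>_. D)))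
        \<le> ennreal (\<theta> 1 * bregman w gw x1 xs
                   + (\<Sum>t = 1..k. 8 * \<theta> t * (gam t)\<^sup>2 * (lam t)\<^sup>2 * (\<sigma>\<^sup>2 / real m))
                   + 4 * \<theta> k * (gam k)\<^sup>2 * (\<sigma>\<^sup>2 / real m))"
proof (cases "k = 0")
  case True thus ?thesis by simp
next
  case False
  hence k1: "k \<ge> 1" by simp
  define K where "K = {1..Suc k} \<times> {..<m}"
  let ?P = "PiM K (\<lambda>_. D)"
  interpret Q: prob_space ?P by (rule PD_prob)
  have finK: "finite K" unfolding K_def by simp
  define xx where "xx \<xi> t = phi gam lam t \<xi>" for \<xi> t
  define Fe where "Fe \<xi> t = est (phi gam lam t \<xi>) t \<xi>" for \<xi> t
  define dsq where "dsq t \<xi> = (norm (xx \<xi> (Suc t) - xx \<xi> t))\<^sup>2" for t \<xi>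
  define ds where "ds t \<xi> = (norm (Fe \<xi> t - F (xx \<xi> t)))\<^sup>2" for t \<xi>
  define S where "S \<xi> = (\<Sum>t=1..k. \<theta> t * gam t * inner (Fe \<xi> (Suc t) - F (xx \<xi> (Suc t))) (xx \<xi> (Suc t) - xs))" for \<xi>
  define NN where "NN t \<xi> = (if t = 1 then 0 else 4 * \<theta> t * (gam t)\<^sup>2 * (lam t)\<^sup>2 * (ds t \<xi> + ds (t - 1) \<xi>))" for t \<xi>
  define N where "N \<xi> = (\<Sum>t=1..k. NN t \<xi>) + 2 * \<theta> k * (gam k)\<^sup>2 * (ds (Suc k) \<xi> + ds k \<xi>)" for \<xi>
  define A where "A \<xi> = (\<Sum>t=1..k. \<theta> t / 8 * dsq t \<xi>)" for \<xi>
  define C where "C = \<theta> 1 * bregman w gw x1 xs"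
  have pw: "A \<xi> + S \<xi> \<le> C + N \<xi>" for \<xi>
  proof -
    have xin: "\<forall>t. xx \<xi> t \<in> X" unfolding xx_def using phi_in by blast
    have step: "\<forall>t\<in>{1..k}. is_min (xx \<xi> t) (gam t *\<^sub>R (Fe \<xi> t + lam t *\<^sub>R (Fe \<xi> t - (if t = 1 then Fe \<xi> 1 else Fe \<xi> (t - 1))))) (xx \<xi> (Suc t))"
      unfolding xx_def Fe_def using phi_step_min by auto
    have x1: "xx \<xi> 1 = x1" unfolding xx_def by simp
    show ?thesis using det_ineq[OF nonneg xin step cond last]
      unfolding A_def S_def C_def N_def NN_def ds_def dsq_def x1 by simp
  qed
  have ds_int: "integrable ?P (ds t)" and ds_le: "(\<integral>\<xi>. ds t \<xi> \<partial>?P) \<le> \<sigma>\<^sup>2 / real m" if "t \<in> {1..Suc k}" for t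
  proof -
    have sub: "{1..t} \<times> {..<m} \<subseteq> K" using that unfolding K_def by auto
    have t1: "t \<ge> 1" using that by auto
    show "integrable ?P (ds t)" using delta_sq_int(1)[OF finK sub t1] unfolding ds_def Fe_def xx_def .
    show "(\<integral>\<xi>. ds t \<xi> \<partial>?P) \<le> \<sigma>\<^sup>2 / real m" using delta_sq_int(2)[OF finK sub t1] unfolding ds_def Fe_def xx_def .
  qed
  have S_int_t: "integrable ?P (\<lambda>\<xi>. inner (Fe \<xi> (Suc t) - F (xx \<xi> (Suc t))) (xx \<xi> (Suc t) - xs))"
    and S_zero_t: "(\<integral>\<xi>. inner (Fe \<xi> (Suc t) - F (xx \<xi> (Suc t))) (xx \<xi> (Suc t) - xs) \<partial>?P) = 0"
    if t: "t \<in> {1..k}" for t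
  proof -
    have s1: "{1..<Suc t} \<times> {..<m} \<subseteq> K - {Suc t} \<times> {..<m}" using t unfolding K_def by auto
    have B: "{Suc t} \<times> {..<m} \<subseteq> K" using t unfolding K_def by auto
    have mom: "integrable (PiM (K - {Suc t} \<times> {..<m}) (\<lambda>_. D)) (\<lambda>\<xi>. norm (phi gam lam (Suc t) \<xi> - xs))"
      by (rule phi_moment[OF _ s1]) (use finK in auto)
    have fin1: "(\<integral>\<^sup>+ x. ennreal (norm (phi gam lam (Suc t) x - xs)) \<partial>PiM (K - {Suc t} \<times> {..<m}) (\<lambda>_. D)) < \<infinity>"
      using integrableD(2)[OF mom] by (simp add: top.not_eq_extremum)
    have s0: "{1..<Suc t} \<times> {..<m} \<subseteq> K" using s1 by auto
    note di = delta_inner[OF finK B phi_meas[OF s0] phi_meas[OF s1] phi_in phi_dep_K[OF s1] fin1]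
    show "integrable ?P (\<lambda>\<xi>. inner (Fe \<xi> (Suc t) - F (xx \<xi> (Suc t))) (xx \<xi> (Suc t) - xs))"
      using di(1) unfolding Fe_def xx_def .
    show "(\<integral>\<xi>. inner (Fe \<xi> (Suc t) - F (xx \<xi> (Suc t))) (xx \<xi> (Suc t) - xs) \<partial>?P) = 0"
      using di(2) unfolding Fe_def xx_def .
  qed
  have S_int: "integrable ?P S" unfolding S_def using S_int_t by auto
  have S_zero: "(\<integral>\<xi>. S \<xi> \<partial>?P) = 0"
    unfolding S_def using S_int_t S_zero_t by (simp add: Bochner_Integration.integral_sum)
  have NN_int: "integrable ?P (NN t)" and NN_le: "(\<integral>\<xi>. NN t \<xi> \<partial>?P) \<le> 8 * \<theta> t * (gam t)\<^sup>2 * (lam t)\<^sup>2 * (\<sigma>\<^sup>2 / real m)"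
    if t: "t \<in> {1..k}" for t
  proof -
    have c0: "0 \<le> 4 * \<theta> t * (gam t)\<^sup>2 * (lam t)\<^sup>2" using nonneg by simp
    have i1: "integrable ?P (ds t)" using ds_int t by auto
    have i2: "t \<noteq> 1 \<Longrightarrow> integrable ?P (ds (t - 1))"
    proof -
      assume "t \<noteq> 1"
      hence "t - 1 \<in> {1..Suc k}" using t by auto
      thus ?thesis by (rule ds_int)
    qed
    have i12: "t \<noteq> 1 \<Longrightarrow> integrable ?P (\<lambda>\<xi>. ds t \<xi> + ds (t - 1) \<xi>)"
      using i1 i2 by (intro Bochner_Integration.integrable_add) auto
    show "integrable ?P (NN t)"
    proof (cases "t = 1")
      case True thus ?thesis unfolding NN_def by simp
    next
      case False
      have "integrable ?P (\<lambda>\<xi>. 4 * \<theta> t * (gam t)\<^sup>2 * (lam t)\<^sup>2 * (ds t \<xi> + ds (t - 1) \<xi>))"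
        using i12[OF False] by (rule Bochner_Integration.integrable_mult_right)
      thus ?thesis unfolding NN_def using False by simp
    qed
    show "(\<integral>\<xi>. NN t \<xi> \<partial>?P) \<le> 8 * \<theta> t * (gam t)\<^sup>2 * (lam t)\<^sup>2 * (\<sigma>\<^sup>2 / real m)"
    proof (cases "t = 1")
      case True thus ?thesis unfolding NN_def using nonneg by simp
    next
      case False
      have "(\<integral>\<xi>. NN t \<xi> \<partial>?P) = 4 * \<theta> t * (gam t)\<^sup>2 * (lam t)\<^sup>2 * ((\<integral>\<xi>. ds t \<xi> \<partial>?P) + (\<integral>\<xi>. ds (t - 1) \<xi> \<partial>?P))"
        unfolding NN_def using False i1 i2 by simp
      also have "\<dots> \<le> 4 * \<theta> t * (gam t)\<^sup>2 * (lam t)\<^sup>2 * (\<sigma>\<^sup>2 / real m + \<sigma>\<^sup>2 / real m)"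
      proof -
        have "t - 1 \<in> {1..Suc k}" using t False by auto
        thus ?thesis using ds_le[of t] ds_le[of "t - 1"] t c0 by (intro mult_left_mono add_mono) auto
      qed
      finally show ?thesis by simp
    qed
  qed
  have dsk: "integrable ?P (ds (Suc k))" "integrable ?P (ds k)" using ds_int k1 by auto
  have N_int: "integrable ?P N" unfolding N_def
    by (intro Bochner_Integration.integrable_add Bochner_Integration.integrable_sum
        Bochner_Integration.integrable_mult_right NN_int dsk) auto
  have N_le: "(\<integral>\<xi>. N \<xi> \<partial>?P) \<le> (\<Sum>t = 1..k. 8 * \<theta> t * (gam t)\<^sup>2 * (lam t)\<^sup>2 * (\<sigma>\<^sup>2 / real m))
                   + 4 * \<theta> k * (gam k)\<^sup>2 * (\<sigma>\<^sup>2 / real m)"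
  proof -
    have "(\<integral>\<xi>. N \<xi> \<partial>?P) = (\<Sum>t=1..k. (\<integral>\<xi>. NN t \<xi> \<partial>?P)) + 2 * \<theta> k * (gam k)\<^sup>2 * ((\<integral>\<xi>. ds (Suc k) \<xi> \<partial>?P) + (\<integral>\<xi>. ds k \<xi> \<partial>?P))"
      unfolding N_def using NN_int dsk
      by (subst Bochner_Integration.integral_add)
         (auto intro!: Bochner_Integration.integrable_sum Bochner_Integration.integrable_mult_right
            Bochner_Integration.integrable_add simp: Bochner_Integration.integral_sum)
    also have "\<dots> \<le> (\<Sum>t = 1..k. 8 * \<theta> t * (gam t)\<^sup>2 * (lam t)\<^sup>2 * (\<sigma>\<^sup>2 / real m)) + 2 * \<theta> k * (gam k)\<^sup>2 * (\<sigma>\<^sup>2 / real m + \<sigma>\<^sup>2 / real m)"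
      using ds_le[of "Suc k"] ds_le[of k] k1 nonneg
      by (intro add_mono sum_mono NN_le mult_left_mono) auto
    finally show ?thesis by simp
  qed
  have dsq_meas: "dsq t \<in> borel_measurable ?P" if "t \<le> k" for t
  proof -
    have "phi gam lam (Suc t) \<in> borel_measurable ?P" "phi gam lam t \<in> borel_measurable ?P"
      using that by (auto intro!: phi_meas simp: K_def)
    note [measurable] = this
    show ?thesis unfolding dsq_def xx_def by measurable
  qed
  have A_meas: "A \<in> borel_measurable ?P" unfolding A_def using dsq_meas by auto
  have A_nn: "A \<xi> \<ge> 0" for \<xi> unfolding A_def dsq_def using nonneg by (auto intro!: sum_nonneg)
  have A_int: "integrable ?P A"
  proof (rule Bochner_Integration.integrable_bound[OF _ A_meas])
    show "integrable ?P (\<lambda>\<xi>. C + N \<xi> - S \<xi>)" using N_int S_int by auto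
    show "AE \<xi> in ?P. norm (A \<xi>) \<le> norm (C + N \<xi> - S \<xi>)"
      using pw A_nn by (intro AE_I2) (smt (verit) real_norm_def)
  qed
  have A_le: "(\<integral>\<xi>. A \<xi> \<partial>?P) \<le> C + (\<integral>\<xi>. N \<xi> \<partial>?P)"
  proof -
    have "(\<integral>\<xi>. A \<xi> \<partial>?P) \<le> (\<integral>\<xi>. C + N \<xi> - S \<xi> \<partial>?P)"
      using pw A_int N_int S_int by (intro integral_mono) (auto simp: algebra_simps)
    also have "\<dots> = C + (\<integral>\<xi>. N \<xi> \<partial>?P) - (\<integral>\<xi>. S \<xi> \<partial>?P)"
      using N_int S_int by (simp add: Q.prob_space)
    finally show ?thesis using S_zero by simp
  qed
  have "(\<Sum>t = 1..k. ennreal (\<theta> t / 8) * (\<integral>\<^sup>+ \<xi>. ennreal (dsq t \<xi>) \<partial>?P)) = (\<Sum>t = 1..k. (\<integral>\<^sup>+ \<xi>. ennreal (\<theta> t / 8 * dsq t \<xi>) \<partial>?P))"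
  proof (intro sum.cong refl)
    fix t assume t: "t \<in> {1..k}"
    have m: "(\<lambda>\<xi>. ennreal (dsq t \<xi>)) \<in> borel_measurable ?P" using dsq_meas[of t] t by auto
    have "(\<integral>\<^sup>+ \<xi>. ennreal (\<theta> t / 8 * dsq t \<xi>) \<partial>?P) = (\<integral>\<^sup>+ \<xi>. ennreal (\<theta> t / 8) * ennreal (dsq t \<xi>) \<partial>?P)"
    proof (intro nn_integral_cong)
      fix \<xi>
      have "0 \<le> \<theta> t / 8" "0 \<le> dsq t \<xi>" using nonneg unfolding dsq_def by auto
      thus "ennreal (\<theta> t / 8 * dsq t \<xi>) = ennreal (\<theta> t / 8) * ennreal (dsq t \<xi>)" by (rule ennreal_mult)
    qed
    also have "\<dots> = ennreal (\<theta> t / 8) * (\<integral>\<^sup>+ \<xi>. ennreal (dsq t \<xi>) \<partial>?P)"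
      by (rule nn_integral_cmult[OF m])
    finally show "ennreal (\<theta> t / 8) * (\<integral>\<^sup>+ \<xi>. ennreal (dsq t \<xi>) \<partial>?P) = (\<integral>\<^sup>+ \<xi>. ennreal (\<theta> t / 8 * dsq t \<xi>) \<partial>?P)" ..
  qed
  also have "\<dots> = (\<integral>\<^sup>+ \<xi>. (\<Sum>t = 1..k. ennreal (\<theta> t / 8 * dsq t \<xi>)) \<partial>?P)"
    by (rule nn_integral_sum[symmetric]) (use dsq_meas in auto)
  also have "\<dots> = (\<integral>\<^sup>+ \<xi>. ennreal (A \<xi>) \<partial>?P)"
    unfolding A_def by (intro nn_integral_cong sum_ennreal) (auto simp: nonneg dsq_def)
  also have "\<dots> = ennreal (\<integral>\<xi>. A \<xi> \<partial>?P)"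
    by (rule nn_integral_eq_integral[OF A_int]) (use A_nn in auto)
  also have "\<dots> \<le> ennreal (C + ((\<Sum>t = 1..k. 8 * \<theta> t * (gam t)\<^sup>2 * (lam t)\<^sup>2 * (\<sigma>\<^sup>2 / real m))
                   + 4 * \<theta> k * (gam k)\<^sup>2 * (\<sigma>\<^sup>2 / real m)))"
    using A_le N_le by (intro ennreal_leI) linarith
  finally show ?thesis unfolding dsq_def xx_def K_def C_def by (simp add: add.assoc)
qed

end


lemma indep_indicator_nn:
  fixes M :: "'w measure" and R :: "'w \<Rightarrow> nat" and PP :: "'b measure" and Y :: "'w \<Rightarrow> 'b"
  assumes Mp: "prob_space M"
    and ind: "indep_rv M (count_space UNIV) R PP Y"
    and dY: "distr M PP Y = PP"
    and f: "f \<in> borel_measurable PP"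
  shows "(\<integral>\<^sup>+ \<omega>. indicator {\<omega> \<in> space M. R \<omega> = j} \<omega> * f (Y \<omega>) \<partial>M)
         = ennreal (measure M {\<omega> \<in> space M. R \<omega> = j}) * integral\<^sup>N PP f"
proof -
  interpret prob_space M by (rule Mp)
  have Rm: "R \<in> measurable M (count_space UNIV)" and Ym: "Y \<in> measurable M PP"
    and isd: "indep_set (sigma_sets (space M) {R -` A \<inter> space M | A. A \<in> sets (count_space UNIV)})
       (sigma_sets (space M) {Y -` A \<inter> space M | A. A \<in> sets PP})"
    using ind unfolding indep_rv_def by auto
  define A0 where "A0 = {\<omega> \<in> space M. R \<omega> = j}"
  have A0e: "A0 = R -` {j} \<inter> space M" unfolding A0_def by auto
  have A0s: "A0 \<in> sets M" unfolding A0e using Rm by (auto intro: measurable_sets)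
  have A0g: "A0 \<in> sigma_sets (space M) {R -` A \<inter> space M | A. A \<in> sets (count_space UNIV)}"
    unfolding A0e by (intro sigma_sets.Basic) auto
  define N where "N = density M (indicator A0)"
  have im: "indicator A0 \<in> borel_measurable M" using A0s by simp
  have eqD: "distr N PP Y = scale_measure (ennreal (prob A0)) PP"
  proof (rule measure_eqI)
    show "sets (distr N PP Y) = sets (scale_measure (ennreal (prob A0)) PP)" by simp
    fix B assume B: "B \<in> sets (distr N PP Y)"
    hence B': "B \<in> sets PP" by simp
    have YB: "Y -` B \<inter> space M \<in> sets M" using Ym B' by (rule measurable_sets)
    have YBg: "Y -` B \<inter> space M \<in> sigma_sets (space M) {Y -` A \<inter> space M | A. A \<in> sets PP}"
      using B' by (intro sigma_sets.Basic) auto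
    have "emeasure (distr N PP Y) B = emeasure N (Y -` B \<inter> space N)"
      using Ym B' unfolding N_def by (intro emeasure_distr) auto
    also have "\<dots> = emeasure N (Y -` B \<inter> space M)" unfolding N_def by simp
    also have "\<dots> = (\<integral>\<^sup>+ x. indicator A0 x * indicator (Y -` B \<inter> space M) x \<partial>M)"
      unfolding N_def by (rule emeasure_density[OF im YB])
    also have "\<dots> = (\<integral>\<^sup>+ x. indicator (A0 \<inter> (Y -` B \<inter> space M)) x \<partial>M)"
      by (intro nn_integral_cong) (auto split: split_indicator)
    also have "\<dots> = emeasure M (A0 \<inter> (Y -` B \<inter> space M))" using A0s YB by simp
    also have "\<dots> = ennreal (prob (A0 \<inter> (Y -` B \<inter> space M)))" using A0s YB by (simp add: emeasure_eq_measure)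
    also have "prob (A0 \<inter> (Y -` B \<inter> space M)) = prob A0 * prob (Y -` B \<inter> space M)"
      by (rule indep_setD[OF isd A0g YBg])
    also have "prob (Y -` B \<inter> space M) = measure PP B"
    proof -
      have "emeasure PP B = emeasure (distr M PP Y) B" by (simp add: dY)
      also have "\<dots> = emeasure M (Y -` B \<inter> space M)" using Ym B' by (rule emeasure_distr)
      finally have "emeasure PP B = emeasure M (Y -` B \<inter> space M)" .
      thus ?thesis unfolding measure_def by simp
    qed
    also have "ennreal (prob A0 * measure PP B) = ennreal (prob A0) * emeasure PP B"
    proof -
      interpret PPp: prob_space PP
      proof -
        have "prob_space (distr M PP Y)" by (rule prob_space_distr[OF Ym])
        thus "prob_space PP" by (simp add: dY)
      qed
      show ?thesis using B' by (simp add: ennreal_mult PPp.emeasure_eq_measure)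
    qed
    finally show "emeasure (distr N PP Y) B = emeasure (scale_measure (ennreal (prob A0)) PP) B" by simp
  qed
  have "(\<integral>\<^sup>+ \<omega>. indicator A0 \<omega> * f (Y \<omega>) \<partial>M) = integral\<^sup>N N (\<lambda>\<omega>. f (Y \<omega>))"
    unfolding N_def using im f Ym by (subst nn_integral_density) auto
  also have "\<dots> = integral\<^sup>N (distr N PP Y) f"
    using Ym f unfolding N_def by (subst nn_integral_distr) auto
  also have "\<dots> = ennreal (prob A0) * integral\<^sup>N PP f"
    unfolding eqD using f by (rule nn_integral_scale_measure)
  finally show ?thesis unfolding A0_def .
qed

lemma sq3: "((x::real) + y + z)\<^sup>2 \<le> 4 * x\<^sup>2 + 4 * y\<^sup>2 + 2 * z\<^sup>2"
proof -
  have "0 \<le> (x + y - z)\<^sup>2 + 2 * (x - y)\<^sup>2" by simp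
  thus ?thesis by (simp add: power2_eq_square algebra_simps)
qed

lemma sq2a: "(2 * (a::real) + b)\<^sup>2 \<le> 8 * a\<^sup>2 + 2 * b\<^sup>2"
proof -
  have "0 \<le> (2 * a - b)\<^sup>2" by simp
  thus ?thesis by (simp add: power2_eq_square algebra_simps)
qed

context soe begin

lemma res_bound:
  assumes t: "t \<ge> 2"
  defines "g \<equiv> (\<lambda>_::nat. 1 / (4 * L))" and "l \<equiv> (\<lambda>_::nat. 1::real)"
  shows "(residual X F (phi g l (Suc t) \<xi>))\<^sup>2 \<le>
      4 * (L + 4 * L * Lw)\<^sup>2 * (norm (phi g l (Suc t) \<xi> - phi g l t \<xi>))\<^sup>2
    + 4 * L\<^sup>2 * (norm (phi g l t \<xi> - phi g l (t - 1) \<xi>))\<^sup>2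
    + 16 * (norm (est (phi g l t \<xi>) t \<xi> - F (phi g l t \<xi>)))\<^sup>2
    + 4 * (norm (est (phi g l (t - 1) \<xi>) (t - 1) \<xi> - F (phi g l (t - 1) \<xi>)))\<^sup>2"
proof -
  define a where "a = phi g l t \<xi>"
  define z where "z = phi g l (Suc t) \<xi>"
  define ap where "ap = phi g l (t - 1) \<xi>"
  define Ft where "Ft = est a t \<xi>"
  define Fp where "Fp = est ap (t - 1) \<xi>"
  have a: "a \<in> X" and z: "z \<in> X" and ap: "ap \<in> X" unfolding a_def z_def ap_def by (auto intro: phi_in)
  define v where "v = g t *\<^sub>R (Ft + l t *\<^sub>R (Ft - Fp))"
  have ism: "is_min a v z"
    using phi_step_min[of t g l \<xi>] t unfolding a_def z_def ap_def Ft_def Fp_def v_def by auto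
  have opt: "inner (v + gw z - gw a) (u - z) \<ge> 0" if u: "u \<in> X" for u
    using opt_cond[OF a z _ u] ism unfolding is_min_def by auto
  define q where "q = (Ft + (Ft - Fp)) + (4 * L) *\<^sub>R (gw z - gw a)"
  have qv: "q = (4 * L) *\<^sub>R (v + gw z - gw a)"
    unfolding q_def v_def g_def l_def using L_pos by (simp add: algebra_simps)
  have qN: "- q \<in> normal_cone X z"
    unfolding normal_cone_def
  proof (intro CollectI ballI)
    fix u assume u: "u \<in> X"
    have "0 \<le> 4 * L * inner (v + gw z - gw a) (u - z)" using opt[OF u] L_pos by simp
    thus "inner (- q) (u - z) \<le> 0" unfolding qv by simp
  qed
  have qin: "q \<in> uminus ` normal_cone X z" using qN by (metis image_eqI minus_minus)
  have res_le: "residual X F z \<le> norm (q - F z)"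
    unfolding residual_def by (rule cINF_lower[OF _ qin]) (auto intro: bdd_belowI[of _ 0])
  have res_nn: "0 \<le> residual X F z"
    unfolding residual_def using qin by (intro cINF_greatest) auto
  define d1 where "d1 = norm (z - a)"
  define d0 where "d0 = norm (a - ap)"
  define e1 where "e1 = norm (Ft - F a)"
  define e0 where "e0 = norm (Fp - F ap)"
  have qe: "q - F z = (F a - F z) + (F a - F ap) + (4 * L) *\<^sub>R (gw z - gw a) + (2 *\<^sub>R (Ft - F a) - (Fp - F ap))"
    unfolding q_def by (simp add: algebra_simps scaleR_2)
  have nb: "norm (q - F z) \<le> (L + 4 * L * Lw) * d1 + L * d0 + (2 * e1 + e0)"
  proof -
    have "norm (q - F z) \<le> norm (F a - F z) + norm (F a - F ap) + norm ((4 * L) *\<^sub>R (gw z - gw a)) + norm (2 *\<^sub>R (Ft - F a) - (Fp - F ap))"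
      unfolding qe by (meson norm_triangle_le order_refl add_mono norm_triangle_ineq)
    moreover have "norm (F a - F z) \<le> L * d1" using F_lipD[OF a z] unfolding d1_def by (simp add: norm_minus_commute)
    moreover have "norm (F a - F ap) \<le> L * d0" using F_lipD[OF a ap] unfolding d0_def .
    moreover have "norm ((4 * L) *\<^sub>R (gw z - gw a)) \<le> 4 * L * (Lw * d1)"
      using gw_lipD[OF z a] L_pos unfolding d1_def by simp
    moreover have "norm (2 *\<^sub>R (Ft - F a) - (Fp - F ap)) \<le> 2 * e1 + e0"
      using norm_triangle_ineq4[of "2 *\<^sub>R (Ft - F a)" "Fp - F ap"] unfolding e1_def e0_def by simp
    ultimately show ?thesis by (simp add: algebra_simps)
  qed
  have "(residual X F z)\<^sup>2 \<le> ((L + 4 * L * Lw) * d1 + L * d0 + (2 * e1 + e0))\<^sup>2"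
    using res_le nb res_nn by (intro power_mono) auto
  also have "\<dots> \<le> 4 * ((L + 4 * L * Lw) * d1)\<^sup>2 + 4 * (L * d0)\<^sup>2 + 2 * (2 * e1 + e0)\<^sup>2" by (rule sq3)
  also have "\<dots> \<le> 4 * ((L + 4 * L * Lw) * d1)\<^sup>2 + 4 * (L * d0)\<^sup>2 + 2 * (8 * e1\<^sup>2 + 2 * e0\<^sup>2)"
    using sq2a[of e1 e0] by simp
  also have "\<dots> = 4 * (L + 4 * L * Lw)\<^sup>2 * d1\<^sup>2 + 4 * L\<^sup>2 * d0\<^sup>2 + 16 * e1\<^sup>2 + 4 * e0\<^sup>2"
    by (simp add: power_mult_distrib)
  finally show ?thesis
    unfolding d1_def d0_def e1_def e0_def a_def z_def ap_def Ft_def Fp_def .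
qed

lemma part1_real:
  fixes k :: nat
  assumes k1: "k \<ge> 1" and mk: "m = k + 1"
  defines "g \<equiv> (\<lambda>_::nat. 1 / (4 * L))" and "l \<equiv> (\<lambda>_::nat. 1::real)"
  shows "\<And>t. t \<in> {1..k} \<Longrightarrow> integrable (PiM ({1..Suc k} \<times> {..<m}) (\<lambda>_. D)) (\<lambda>\<xi>. (norm (phi g l (t + 1) \<xi> - phi g l t \<xi>))\<^sup>2)"
    and "(\<Sum>t=1..k. (\<integral>\<xi>. (norm (phi g l (t + 1) \<xi> - phi g l t \<xi>))\<^sup>2 \<partial>PiM ({1..Suc k} \<times> {..<m}) (\<lambda>_. D)))
          \<le> 8 * bregman w gw x1 xs + 4 * \<sigma>\<^sup>2 / L\<^sup>2"
proof -
  let ?P = "PiM ({1..Suc k} \<times> {..<m}) (\<lambda>_. D)"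
  define dsq where "dsq t \<xi> = (norm (phi g l (t + 1) \<xi> - phi g l t \<xi>))\<^sup>2" for t \<xi>
  define T where "T t = (\<integral>\<^sup>+ \<xi>. ennreal (dsq t \<xi>) \<partial>?P)" for t
  define RB where "RB = 1 * bregman w gw x1 xs + (\<Sum>t = 1..k. 8 * 1 * (g t)\<^sup>2 * (l t)\<^sup>2 * (\<sigma>\<^sup>2 / real m))
                   + 4 * 1 * (g k)\<^sup>2 * (\<sigma>\<^sup>2 / real m)"
  have gsq: "16 * L\<^sup>2 * (g t)\<^sup>2 = 1" for t unfolding g_def using L_pos by (simp add: power2_eq_square field_simps)
  have P1: "(\<Sum>t = 1..k. ennreal (1 / 8) * T t) \<le> ennreal RB"
  proof -
    have "(\<Sum>t = 1..k. ennreal ((\<lambda>_. 1::real) t / 8) *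
            (\<integral>\<^sup>+ \<xi>. ennreal ((norm (phi g l (t + 1) \<xi> - phi g l t \<xi>))\<^sup>2) \<partial>?P))
        \<le> ennreal ((\<lambda>_. 1::real) 1 * bregman w gw x1 xs
                   + (\<Sum>t = 1..k. 8 * (\<lambda>_. 1::real) t * (g t)\<^sup>2 * (l t)\<^sup>2 * (\<sigma>\<^sup>2 / real m))
                   + 4 * (\<lambda>_. 1::real) k * (g k)\<^sup>2 * (\<sigma>\<^sup>2 / real m))"
    proof (rule part1_P)
      show "\<forall>t. g t \<ge> 0 \<and> l t \<ge> 0 \<and> (\<lambda>_. 1::real) t \<ge> 0" unfolding g_def l_def using L_pos by simp
      show "\<forall>t\<in>{1..k}. (\<lambda>_. 1::real) (t + 1) * g (t + 1) * l (t + 1) = g t * (\<lambda>_. 1::real) t \<and>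
                     (\<lambda>_. 1::real) (t - 1) \<ge> 16 * L\<^sup>2 * (g t)\<^sup>2 * (l t)\<^sup>2 * (\<lambda>_. 1::real) t \<and> (\<lambda>_. 1::real) t \<le> (\<lambda>_. 1::real) (t - 1)"
        using gsq unfolding l_def by (simp add: g_def)
      show "8 * L\<^sup>2 * (g k)\<^sup>2 \<le> 1" using gsq[of k] by simp
    qed
    thus ?thesis unfolding T_def dsq_def RB_def by simp
  qed
  have RBle: "RB \<le> bregman w gw x1 xs + \<sigma>\<^sup>2 / (2 * L\<^sup>2)"
  proof -
    have "RB = bregman w gw x1 xs + (8 * real k + 4) * (\<sigma>\<^sup>2 / (16 * L\<^sup>2 * real m))"
      unfolding RB_def g_def l_def using L_pos m_pos by (simp add: power2_eq_square field_simps)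
    also have "(8 * real k + 4) * (\<sigma>\<^sup>2 / (16 * L\<^sup>2 * real m)) \<le> \<sigma>\<^sup>2 / (2 * L\<^sup>2)"
    proof -
      have "(8 * real k + 4) * (\<sigma>\<^sup>2 / (16 * L\<^sup>2 * real m)) = ((8 * real k + 4) / (8 * real m)) * (\<sigma>\<^sup>2 / (2 * L\<^sup>2))"
        using L_pos m_pos by (simp add: field_simps)
      also have "\<dots> \<le> 1 * (\<sigma>\<^sup>2 / (2 * L\<^sup>2))"
        using mk by (intro mult_right_mono) (auto simp: field_simps)
      finally show ?thesis by simp
    qed
    finally show ?thesis by simp
  qed
  have Tfin: "T t < \<infinity>" if t: "t \<in> {1..k}" for t
  proof -
    have "ennreal (1 / 8) * T t \<le> (\<Sum>t = 1..k. ennreal (1 / 8) * T t)"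
      by (rule member_le_sum) (use t in auto)
    also have "\<dots> < \<infinity>" using P1 by (simp add: le_less_trans)
    finally show ?thesis by (auto simp: ennreal_mult_less_top)
  qed
  have dm: "dsq t \<in> borel_measurable ?P" if "t \<in> {1..k}" for t
  proof -
    have "phi g l (t + 1) \<in> borel_measurable ?P" "phi g l t \<in> borel_measurable ?P"
      using that by (auto intro!: phi_meas)
    note [measurable] = this
    show ?thesis unfolding dsq_def by measurable
  qed
  have di: "integrable ?P (dsq t)" if t: "t \<in> {1..k}" for t
    by (rule integrableI_nonneg[OF dm[OF t]]) (use Tfin[OF t] in \<open>auto simp: T_def dsq_def\<close>)
  show "\<And>t. t \<in> {1..k} \<Longrightarrow> integrable ?P (\<lambda>\<xi>. (norm (phi g l (t + 1) \<xi> - phi g l t \<xi>))\<^sup>2)"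
    using di unfolding dsq_def by simp
  have Te: "T t = ennreal (\<integral>\<xi>. dsq t \<xi> \<partial>?P)" if t: "t \<in> {1..k}" for t
    unfolding T_def by (rule nn_integral_eq_integral[OF di[OF t]]) (auto simp: dsq_def)
  have Dnn: "0 \<le> (\<integral>\<xi>. dsq t \<xi> \<partial>?P)" for t by (rule Bochner_Integration.integral_nonneg) (auto simp: dsq_def)
  have "(\<Sum>t = 1..k. ennreal (1 / 8) * T t) = ennreal (\<Sum>t = 1..k. 1 / 8 * (\<integral>\<xi>. dsq t \<xi> \<partial>?P))"
    using Te Dnn by (simp add: ennreal_mult[symmetric] sum_ennreal)
  hence "ennreal (\<Sum>t = 1..k. 1 / 8 * (\<integral>\<xi>. dsq t \<xi> \<partial>?P)) \<le> ennreal RB"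
    using P1 by simp
  moreover have RBnn: "0 \<le> RB" unfolding RB_def using V_nonneg[OF x1_in xs_in]
    by (intro add_nonneg_nonneg sum_nonneg mult_nonneg_nonneg) auto
  ultimately have "(\<Sum>t = 1..k. 1 / 8 * (\<integral>\<xi>. dsq t \<xi> \<partial>?P)) \<le> RB"
    by (simp add: ennreal_le_iff)
  hence "(\<Sum>t = 1..k. (\<integral>\<xi>. dsq t \<xi> \<partial>?P)) \<le> 8 * RB" by (simp add: sum_divide_distrib[symmetric])
  also have "\<dots> \<le> 8 * bregman w gw x1 xs + 4 * \<sigma>\<^sup>2 / L\<^sup>2" using RBle by (simp add: field_simps)
  finally show "(\<Sum>t=1..k. (\<integral>\<xi>. (norm (phi g l (t + 1) \<xi> - phi g l t \<xi>))\<^sup>2 \<partial>?P)) \<le> 8 * bregman w gw x1 xs + 4 * \<sigma>\<^sup>2 / L\<^sup>2"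
    unfolding dsq_def .
qed

end


theorem theorem3p2:
  fixes X :: "'a::euclidean_space set" and F :: "'a \<Rightarrow> 'a" and L Lw \<sigma> :: real
    and w :: "'a \<Rightarrow> real" and gw :: "'a \<Rightarrow> 'a"
    and G :: "'a \<Rightarrow> 's \<Rightarrow> 'a" and D :: "'s measure"
    and M :: "'w measure" and xi :: "nat \<Rightarrow> nat \<Rightarrow> 'w \<Rightarrow> 's"
    and m k :: nat and x1 xs :: 'a
  assumes X_ne: "X \<noteq> {}" and X_closed: "closed X" and X_convex: "convex X"
    and F_lip: "L-lipschitz_on X F" and L_pos: "L > 0"
    and w_deriv: "\<forall>z\<in>X. (w has_derivative (\<lambda>h. inner (gw z) h)) (at z within X)"
    and w_sconvex: "strongly_convex_on X 1 w"
    and gw_lip: "Lw-lipschitz_on X gw"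
    and D_prob: "prob_space D"
    and G_meas: "(\<lambda>(z, s). G z s) \<in> borel_measurable (borel \<Otimes>\<^sub>M D)"
    and G_oracle: "\<forall>z\<in>X. integrable D (G z) \<and> (\<integral>s. G z s \<partial>D) = F z \<and>
                     (\<integral>\<^sup>+ s. ennreal ((norm (G z s - F z))\<^sup>2) \<partial>D) \<le> ennreal (\<sigma>\<^sup>2)"
    and M_prob: "prob_space M"
    and m_pos: "m > 0"
    and xi_indep: "prob_space.indep_vars M (\<lambda>_. D) (\<lambda>(t, i). xi t i) ({1..Suc k} \<times> {..<m})"
    and xi_distr: "\<forall>t\<in>{1..Suc k}. \<forall>i<m. distr M D (xi t i) = D"
    and x1_in: "x1 \<in> X"
    and xs_in: "xs \<in> X"
    and xs_sol: "\<forall>z\<in>X. inner (F xs) (z - xs) \<ge> 0 \<and> inner (F z) (z - xs) \<ge> 0"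
  shows
    "(\<forall>gam lam \<theta> x.
        (\<forall>t. gam t \<ge> 0 \<and> lam t \<ge> 0 \<and> \<theta> t \<ge> 0) \<and>
        soe_iterates X w gw G xi m gam lam x1 k x \<and>
        (\<forall>t\<in>{1..k}. \<theta> (t + 1) * gam (t + 1) * lam (t + 1) = gam t * \<theta> t \<and>
                     \<theta> (t - 1) \<ge> 16 * L\<^sup>2 * (gam t)\<^sup>2 * (lam t)\<^sup>2 * \<theta> t \<and>
                     \<theta> t \<le> \<theta> (t - 1)) \<and>
        8 * L\<^sup>2 * (gam k)\<^sup>2 \<le> 1
      \<longrightarrow>
        (\<Sum>t = 1..k. ennreal (\<theta> t / 8) *
            (\<integral>\<^sup>+ \<omega>. ennreal ((norm (x (t + 1) \<omega> - x t \<omega>))\<^sup>2) \<partial>M))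
        \<le> ennreal (\<theta> 1 * bregman w gw x1 xs
                   + (\<Sum>t = 1..k. 8 * \<theta> t * (gam t)\<^sup>2 * (lam t)\<^sup>2 * (\<sigma>\<^sup>2 / real m))
                   + 4 * \<theta> k * (gam k)\<^sup>2 * (\<sigma>\<^sup>2 / real m)))
     \<and>
     (k \<ge> 2 \<and> m = k + 1 \<longrightarrow>
       (\<forall>x (R :: 'w \<Rightarrow> nat).
          soe_iterates X w gw G xi m (\<lambda>_. 1 / (4 * L)) (\<lambda>_. 1) x1 k x \<and>
          indep_rv M (count_space UNIV) R
             (Pi\<^sub>M ({1..Suc k} \<times> {..<m}) (\<lambda>_. D))
             (\<lambda>\<omega>. \<lambda>p\<in>{1..Suc k} \<times> {..<m}. xi (fst p) (snd p) \<omega>) \<and>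
          (\<forall>j. measure M {\<omega> \<in> space M. R \<omega> = j} =
                 (if j \<in> {2..k} then 1 / (real k - 1) else 0))
        \<longrightarrow>
          (\<integral>\<^sup>+ \<omega>. ennreal ((residual X F (x (R \<omega> + 1) \<omega>))\<^sup>2) \<partial>M)
          \<le> ennreal (20 * \<sigma>\<^sup>2 / (real k + 1)
                     + 32 * ((L + 4 * L * Lw)\<^sup>2 + L\<^sup>2)
                         * (2 * bregman w gw x1 xs + \<sigma>\<^sup>2 / L\<^sup>2) / (real k - 1))))"
proof -
  have cv: "cvx X w gw" using X_convex X_closed X_ne w_deriv w_sconvex by (intro cvx.intro) blast+
  have sa: "soe_axioms X gw F L Lw \<sigma> G D m x1 xs"
    using F_lip L_pos gw_lip D_prob G_meas G_oracle m_pos x1_in xs_in xs_sol by (intro soe_axioms.intro) blast+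
  interpret S: soe X w gw F L Lw \<sigma> G D m x1 xs by (rule soe.intro[OF cv sa])
  interpret Mp: prob_space M by (rule M_prob)
  define I where "I = {1..Suc k} \<times> {..<m}"
  have Ine: "I \<noteq> {}" using m_pos unfolding I_def by auto
  have rv: "(\<lambda>(t, i). xi t i) p \<in> measurable M D" if "p \<in> I" for p
    using xi_indep that unfolding Mp.indep_vars_def I_def by auto
  have xim: "xi t i \<in> measurable M D" if "(t, i) \<in> I" for t i
    using rv[OF that] by simp
  have XiE: "S.Xi k xi = (\<lambda>\<omega>. \<lambda>p\<in>I. (\<lambda>(t, i). xi t i) p \<omega>)"
    unfolding S.Xi_def I_def by (auto simp: fun_eq_iff split_beta)
  have Xim: "S.Xi k xi \<in> measurable M (PiM I (\<lambda>_. D))"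
    unfolding XiE by (rule measurable_restrict) (use rv in auto)
  have dist: "distr M (PiM I (\<lambda>_. D)) (S.Xi k xi) = PiM I (\<lambda>_. D)"
  proof -
    have "distr M (PiM I (\<lambda>_. D)) (\<lambda>\<omega>. \<lambda>p\<in>I. (\<lambda>(t, i). xi t i) p \<omega>) = PiM I (\<lambda>p. distr M D ((\<lambda>(t, i). xi t i) p))"
    proof -
      have xi_indep': "Mp.indep_vars (\<lambda>_. D) (\<lambda>(t, i). xi t i) I" using xi_indep unfolding I_def .
      show ?thesis using Mp.indep_vars_iff_distr_eq_PiM'[of I "\<lambda>(t, i). xi t i" "\<lambda>_. D", OF Ine rv] xi_indep'
        by blast
    qed
    also have "\<dots> = PiM I (\<lambda>_. D)"
      by (intro PiM_cong refl) (use xi_distr in \<open>auto simp: I_def split_beta\<close>)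
    finally show ?thesis unfolding XiE .
  qed
  have transfer: "(\<integral>\<^sup>+\<omega>. f (S.Xi k xi \<omega>) \<partial>M) = integral\<^sup>N (PiM I (\<lambda>_. D)) f"
    if f: "f \<in> borel_measurable (PiM I (\<lambda>_. D))" for f
  proof -
    have "integral\<^sup>N (PiM I (\<lambda>_. D)) f = integral\<^sup>N (distr M (PiM I (\<lambda>_. D)) (S.Xi k xi)) f" by (simp add: dist)
    also have "\<dots> = (\<integral>\<^sup>+\<omega>. f (S.Xi k xi \<omega>) \<partial>M)" by (rule nn_integral_distr[OF Xim]) (use f in simp)
    finally show ?thesis by simp
  qed
  show ?thesis
  proof (intro conjI allI impI)
    fix gam lam \<theta> :: "nat \<Rightarrow> real" and x :: "nat \<Rightarrow> 'w \<Rightarrow> 'a"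
    assume H: "(\<forall>t. gam t \<ge> 0 \<and> lam t \<ge> 0 \<and> \<theta> t \<ge> 0) \<and>
        soe_iterates X w gw G xi m gam lam x1 k x \<and>
        (\<forall>t\<in>{1..k}. \<theta> (t + 1) * gam (t + 1) * lam (t + 1) = gam t * \<theta> t \<and>
                     \<theta> (t - 1) \<ge> 16 * L\<^sup>2 * (gam t)\<^sup>2 * (lam t)\<^sup>2 * \<theta> t \<and>
                     \<theta> t \<le> \<theta> (t - 1)) \<and>
        8 * L\<^sup>2 * (gam k)\<^sup>2 \<le> 1"
    have soe: "soe_iterates X w gw G xi m gam lam x1 k x" using H by blast
    have eq: "(\<integral>\<^sup>+ \<omega>. ennreal ((norm (x (t + 1) \<omega> - x t \<omega>))\<^sup>2) \<partial>M)
        = (\<integral>\<^sup>+ \<xi>. ennreal ((norm (S.phi gam lam (t + 1) \<xi> - S.phi gam lam t \<xi>))\<^sup>2) \<partial>PiM I (\<lambda>_. D))"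
      if t: "t \<in> {1..k}" for t
    proof -
      have xe: "x s \<omega> = S.phi gam lam s (S.Xi k xi \<omega>)" if "s \<in> {t, t + 1}" for s \<omega>
        by (rule S.phi_soe[OF soe]) (use t that in auto)
      have m1: "S.phi gam lam (t + 1) \<in> borel_measurable (PiM I (\<lambda>_. D))"
        "S.phi gam lam t \<in> borel_measurable (PiM I (\<lambda>_. D))"
        using t unfolding I_def by (auto intro!: S.phi_meas)
      note [measurable] = m1
      have "(\<integral>\<^sup>+ \<omega>. ennreal ((norm (x (t + 1) \<omega> - x t \<omega>))\<^sup>2) \<partial>M)
          = (\<integral>\<^sup>+ \<omega>. ennreal ((norm (S.phi gam lam (t + 1) (S.Xi k xi \<omega>) - S.phi gam lam t (S.Xi k xi \<omega>)))\<^sup>2) \<partial>M)"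
        using xe by simp
      also have "\<dots> = (\<integral>\<^sup>+ \<xi>. ennreal ((norm (S.phi gam lam (t + 1) \<xi> - S.phi gam lam t \<xi>))\<^sup>2) \<partial>PiM I (\<lambda>_. D))"
        by (rule transfer) measurable
      finally show ?thesis .
    qed
    have "(\<Sum>t = 1..k. ennreal (\<theta> t / 8) * (\<integral>\<^sup>+ \<omega>. ennreal ((norm (x (t + 1) \<omega> - x t \<omega>))\<^sup>2) \<partial>M))
        = (\<Sum>t = 1..k. ennreal (\<theta> t / 8) * (\<integral>\<^sup>+ \<xi>. ennreal ((norm (S.phi gam lam (t + 1) \<xi> - S.phi gam lam t \<xi>))\<^sup>2) \<partial>PiM I (\<lambda>_. D)))"
      using eq by simp
    also have "\<dots> \<le> ennreal (\<theta> 1 * bregman w gw x1 xs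
                   + (\<Sum>t = 1..k. 8 * \<theta> t * (gam t)\<^sup>2 * (lam t)\<^sup>2 * (\<sigma>\<^sup>2 / real m))
                   + 4 * \<theta> k * (gam k)\<^sup>2 * (\<sigma>\<^sup>2 / real m))"
      unfolding I_def by (rule S.part1_P) (use H in auto)
    finally show "(\<Sum>t = 1..k. ennreal (\<theta> t / 8) * (\<integral>\<^sup>+ \<omega>. ennreal ((norm (x (t + 1) \<omega> - x t \<omega>))\<^sup>2) \<partial>M))
        \<le> ennreal (\<theta> 1 * bregman w gw x1 xs
                   + (\<Sum>t = 1..k. 8 * \<theta> t * (gam t)\<^sup>2 * (lam t)\<^sup>2 * (\<sigma>\<^sup>2 / real m))
                   + 4 * \<theta> k * (gam k)\<^sup>2 * (\<sigma>\<^sup>2 / real m))" .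
  next
    assume hk: "k \<ge> 2 \<and> m = k + 1"
    hence k2: "k \<ge> 2" and mk: "m = k + 1" by auto
    fix x :: "nat \<Rightarrow> 'w \<Rightarrow> 'a" and R :: "'w \<Rightarrow> nat"
    assume H2: "soe_iterates X w gw G xi m (\<lambda>_. 1 / (4 * L)) (\<lambda>_. 1) x1 k x \<and>
          indep_rv M (count_space UNIV) R
             (Pi\<^sub>M ({1..Suc k} \<times> {..<m}) (\<lambda>_. D))
             (\<lambda>\<omega>. \<lambda>p\<in>{1..Suc k} \<times> {..<m}. xi (fst p) (snd p) \<omega>) \<and>
          (\<forall>j. measure M {\<omega> \<in> space M. R \<omega> = j} =
                 (if j \<in> {2..k} then 1 / (real k - 1) else 0))"
    define g where "g = (\<lambda>_::nat. 1 / (4 * L))"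
    define l where "l = (\<lambda>_::nat. 1::real)"
    let ?P = "PiM I (\<lambda>_. D)"
    let ?Xi = "S.Xi k xi"
    have soe: "soe_iterates X w gw G xi m g l x1 k x" using H2 unfolding g_def l_def by blast
    have ind: "indep_rv M (count_space UNIV) R ?P ?Xi"
    proof -
      have "?Xi = (\<lambda>\<omega>. \<lambda>p\<in>{1..Suc k} \<times> {..<m}. xi (fst p) (snd p) \<omega>)" unfolding S.Xi_def ..
      thus ?thesis using H2 unfolding I_def by simp
    qed
    have Rm: "R \<in> measurable M (count_space UNIV)" using ind unfolding indep_rv_def by blast
    define A where "A j = {\<omega> \<in> space M. R \<omega> = j}" for j
    have As: "A j \<in> sets M" for j
    proof -
      have "A j = R -` {j} \<inter> space M" unfolding A_def by auto
      thus ?thesis using Rm by (auto intro: measurable_sets)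
    qed
    have pA: "measure M (A j) = (if j \<in> {2..k} then 1 / (real k - 1) else 0)" for j
      using H2 unfolding A_def by blast
    have AE_R: "AE \<omega> in M. R \<omega> \<in> {2..k}"
    proof -
      have "measure M (\<Union>j\<in>{2..k}. A j) = (\<Sum>j\<in>{2..k}. measure M (A j))"
      proof (rule Mp.finite_measure_finite_Union)
        show "disjoint_family_on A {2..k}" unfolding disjoint_family_on_def A_def by auto
        show "A ` {2..k} \<subseteq> Mp.events" using As by auto
      qed simp
      also have "\<dots> = (\<Sum>j\<in>{2..k}. 1 / (real k - 1))" using pA by simp
      also have "\<dots> = 1" using k2 by (simp add: of_nat_diff)
      finally have "measure M (\<Union>j\<in>{2..k}. A j) = 1" .
      hence "AE \<omega> in M. \<omega> \<in> (\<Union>j\<in>{2..k}. A j)" by (intro Mp.AE_prob_1)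
      thus ?thesis by eventually_elim (auto simp: A_def)
    qed
    define c where "c = (L + 4 * L * Lw)\<^sup>2"
    define dsq where "dsq t \<xi> = (norm (S.phi g l (t + 1) \<xi> - S.phi g l t \<xi>))\<^sup>2" for t \<xi>
    define ds where "ds t \<xi> = (norm (S.est (S.phi g l t \<xi>) t \<xi> - F (S.phi g l t \<xi>)))\<^sup>2" for t \<xi>
    define Bd where "Bd j \<xi> = 4 * c * dsq j \<xi> + 4 * L\<^sup>2 * dsq (j - 1) \<xi> + 16 * ds j \<xi> + 4 * ds (j - 1) \<xi>" for j \<xi>
    have k1: "k \<ge> 1" using k2 by simp
    have finI: "finite I" unfolding I_def by simp
    have dsq_int: "integrable ?P (dsq t)" if "t \<in> {1..k}" for t
      using S.part1_real(1)[OF k1 mk that] unfolding dsq_def g_def l_def I_def .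
    have Dsum: "(\<Sum>t=1..k. (\<integral>\<xi>. dsq t \<xi> \<partial>?P)) \<le> 8 * bregman w gw x1 xs + 4 * \<sigma>\<^sup>2 / L\<^sup>2"
      using S.part1_real(2)[OF k1 mk] unfolding dsq_def g_def l_def I_def .
    have ds_int: "integrable ?P (ds t)" and ds_le: "(\<integral>\<xi>. ds t \<xi> \<partial>?P) \<le> \<sigma>\<^sup>2 / real m"
      if t: "t \<in> {1..Suc k}" for t
    proof -
      have sub: "{1..t} \<times> {..<m} \<subseteq> I" using t unfolding I_def by auto
      have t1: "t \<ge> 1" using t by auto
      show "integrable ?P (ds t)" using S.delta_sq_int(1)[OF finI sub t1] unfolding ds_def .
      show "(\<integral>\<xi>. ds t \<xi> \<partial>?P) \<le> \<sigma>\<^sup>2 / real m" using S.delta_sq_int(2)[OF finI sub t1] unfolding ds_def .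
    qed
    have dsq_nn: "0 \<le> dsq t \<xi>" for t \<xi> unfolding dsq_def by simp
    have ds_nn: "0 \<le> ds t \<xi>" for t \<xi> unfolding ds_def by simp
    have Bd_nn: "0 \<le> Bd j \<xi>" for j \<xi> unfolding Bd_def c_def using dsq_nn ds_nn by (intro add_nonneg_nonneg mult_nonneg_nonneg) auto
    have Bd_int: "integrable ?P (Bd j)" if j: "j \<in> {2..k}" for j
    proof -
      have "j \<in> {1..k}" "j - 1 \<in> {1..k}" "j \<in> {1..Suc k}" "j - 1 \<in> {1..Suc k}" using j by auto
      thus ?thesis unfolding Bd_def
        by (intro Bochner_Integration.integrable_add Bochner_Integration.integrable_mult_right dsq_int ds_int)
    qed
    have Bd_val: "(\<integral>\<xi>. Bd j \<xi> \<partial>?P) = 4 * c * (\<integral>\<xi>. dsq j \<xi> \<partial>?P) + 4 * L\<^sup>2 * (\<integral>\<xi>. dsq (j - 1) \<xi> \<partial>?P)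
        + 16 * (\<integral>\<xi>. ds j \<xi> \<partial>?P) + 4 * (\<integral>\<xi>. ds (j - 1) \<xi> \<partial>?P)" if j: "j \<in> {2..k}" for j
    proof -
      have "j \<in> {1..k}" "j - 1 \<in> {1..k}" "j \<in> {1..Suc k}" "j - 1 \<in> {1..Suc k}" using j by auto
      note ii = dsq_int[OF this(1)] dsq_int[OF this(2)] ds_int[OF this(3)] ds_int[OF this(4)]
      show ?thesis unfolding Bd_def using ii
        by (simp add: Bochner_Integration.integral_add Bochner_Integration.integrable_add)
    qed
    have mBd: "(\<lambda>\<xi>. ennreal (Bd j \<xi>)) \<in> borel_measurable ?P" if "j \<in> {2..k}" for j
      using borel_measurable_integrable[OF Bd_int[OF that]] by simp
    have res_pw: "(residual X F (S.phi g l (Suc j) \<xi>))\<^sup>2 \<le> Bd j \<xi>" if j: "j \<ge> 2" for j \<xi>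
    proof -
      have jj: "j - 1 + 1 = j" using j by simp
      show ?thesis using S.res_bound[OF j, of \<xi>] unfolding Bd_def dsq_def ds_def c_def g_def l_def jj
        by simp
    qed
    have le1: "(\<integral>\<^sup>+ \<omega>. ennreal ((residual X F (x (R \<omega> + 1) \<omega>))\<^sup>2) \<partial>M)
        \<le> (\<integral>\<^sup>+ \<omega>. (\<Sum>j\<in>{2..k}. indicator (A j) \<omega> * ennreal (Bd j (?Xi \<omega>))) \<partial>M)"
    proof (rule nn_integral_mono_AE)
      show "AE \<omega> in M. ennreal ((residual X F (x (R \<omega> + 1) \<omega>))\<^sup>2) \<le> (\<Sum>j\<in>{2..k}. indicator (A j) \<omega> * ennreal (Bd j (?Xi \<omega>)))"
        using AE_R AE_space
      proof eventually_elim
        case (elim \<omega>)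
        hence Rw: "R \<omega> \<in> {2..k}" and wsp: "\<omega> \<in> space M" by auto
        have xe: "x (R \<omega> + 1) \<omega> = S.phi g l (R \<omega> + 1) (?Xi \<omega>)"
          by (rule S.phi_soe[OF soe]) (use Rw in auto)
        have ind_eq: "indicator (A j) \<omega> = (if j = R \<omega> then 1 else (0::ennreal))" for j
          using wsp unfolding A_def by (auto simp: indicator_def)
        have "(\<Sum>j\<in>{2..k}. indicator (A j) \<omega> * ennreal (Bd j (?Xi \<omega>))) = (\<Sum>j\<in>{2..k}. if j = R \<omega> then ennreal (Bd j (?Xi \<omega>)) else 0)"
          unfolding ind_eq by (intro sum.cong) auto
        also have "\<dots> = ennreal (Bd (R \<omega>) (?Xi \<omega>))" using Rw by (simp add: sum.delta')
        finally have se: "(\<Sum>j\<in>{2..k}. indicator (A j) \<omega> * ennreal (Bd j (?Xi \<omega>))) = ennreal (Bd (R \<omega>) (?Xi \<omega>))" .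
        have "(residual X F (x (R \<omega> + 1) \<omega>))\<^sup>2 \<le> Bd (R \<omega>) (?Xi \<omega>)"
          unfolding xe using res_pw[of "R \<omega>" "?Xi \<omega>"] Rw by simp
        thus ?case unfolding se by (rule ennreal_leI)
      qed
    qed
    have eq2: "(\<integral>\<^sup>+ \<omega>. (\<Sum>j\<in>{2..k}. indicator (A j) \<omega> * ennreal (Bd j (?Xi \<omega>))) \<partial>M)
        = (\<Sum>j\<in>{2..k}. ennreal (1 / (real k - 1)) * ennreal (\<integral>\<xi>. Bd j \<xi> \<partial>?P))"
    proof -
      have "(\<integral>\<^sup>+ \<omega>. (\<Sum>j\<in>{2..k}. indicator (A j) \<omega> * ennreal (Bd j (?Xi \<omega>))) \<partial>M)
          = (\<Sum>j\<in>{2..k}. (\<integral>\<^sup>+ \<omega>. indicator (A j) \<omega> * ennreal (Bd j (?Xi \<omega>)) \<partial>M))"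
      proof (rule nn_integral_sum)
        fix j assume j: "j \<in> {2..k}"
        have "(\<lambda>\<omega>. ennreal (Bd j (?Xi \<omega>))) \<in> borel_measurable M"
          using measurable_compose[OF Xim mBd[OF j]] by simp
        moreover have "indicator (A j) \<in> borel_measurable M" using As by simp
        ultimately show "(\<lambda>\<omega>. indicator (A j) \<omega> * ennreal (Bd j (?Xi \<omega>))) \<in> borel_measurable M"
          by (intro borel_measurable_times_ennreal)
      qed
      also have "\<dots> = (\<Sum>j\<in>{2..k}. ennreal (1 / (real k - 1)) * ennreal (\<integral>\<xi>. Bd j \<xi> \<partial>?P))"
      proof (rule sum.cong[OF refl])
        fix j assume j: "j \<in> {2..k}"
        have "(\<integral>\<^sup>+ \<omega>. indicator (A j) \<omega> * ennreal (Bd j (?Xi \<omega>)) \<partial>M)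
            = ennreal (measure M (A j)) * (\<integral>\<^sup>+ \<xi>. ennreal (Bd j \<xi>) \<partial>?P)"
          unfolding A_def by (rule indep_indicator_nn[OF M_prob ind dist mBd[OF j]])
        also have "(\<integral>\<^sup>+ \<xi>. ennreal (Bd j \<xi>) \<partial>?P) = ennreal (\<integral>\<xi>. Bd j \<xi> \<partial>?P)"
          by (rule nn_integral_eq_integral[OF Bd_int[OF j]]) (use Bd_nn in auto)
        finally show "(\<integral>\<^sup>+ \<omega>. indicator (A j) \<omega> * ennreal (Bd j (?Xi \<omega>)) \<partial>M)
            = ennreal (1 / (real k - 1)) * ennreal (\<integral>\<xi>. Bd j \<xi> \<partial>?P)"
          using pA[of j] j by simp
      qed
      finally show ?thesis .
    qed
    define V where "V = bregman w gw x1 xs"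
    have Vnn: "0 \<le> V" unfolding V_def by (rule S.V_nonneg[OF x1_in xs_in])
    define Dt where "Dt t = (\<integral>\<xi>. dsq t \<xi> \<partial>?P)" for t
    define Et where "Et t = (\<integral>\<xi>. ds t \<xi> \<partial>?P)" for t
    have Dt_nn: "0 \<le> Dt t" for t unfolding Dt_def using dsq_nn by (simp add: Bochner_Integration.integral_nonneg)
    have K1: "real k - 1 > 0" using k2 by simp
    have s1: "(\<Sum>j\<in>{2..k}. Dt j) \<le> (\<Sum>t=1..k. Dt t)"
      by (rule sum_mono2) (use Dt_nn in auto)
    have s2: "(\<Sum>j\<in>{2..k}. Dt (j - 1)) \<le> (\<Sum>t=1..k. Dt t)"
    proof -
      have "{2..k} = {1 + 1..(k - 1) + 1}" using k2 by auto
      hence "(\<Sum>j\<in>{2..k}. Dt (j - 1)) = (\<Sum>i\<in>{1..k - 1}. Dt (i + 1 - 1))"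
        by (simp only: sum.shift_bounds_cl_nat_ivl)
      also have "\<dots> = (\<Sum>i\<in>{1..k - 1}. Dt i)" by simp
      also have "\<dots> \<le> (\<Sum>t=1..k. Dt t)" by (rule sum_mono2) (use Dt_nn in auto)
      finally show ?thesis .
    qed
    have s3: "(\<Sum>j\<in>{2..k}. Et j) \<le> (real k - 1) * (\<sigma>\<^sup>2 / real m)"
    proof -
      have "(\<Sum>j\<in>{2..k}. Et j) \<le> (\<Sum>j\<in>{2..k}. \<sigma>\<^sup>2 / real m)"
        by (rule sum_mono) (use ds_le in \<open>auto simp: Et_def\<close>)
      thus ?thesis using k2 by (simp add: of_nat_diff)
    qed
    have s4: "(\<Sum>j\<in>{2..k}. Et (j - 1)) \<le> (real k - 1) * (\<sigma>\<^sup>2 / real m)"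
    proof -
      have "(\<Sum>j\<in>{2..k}. Et (j - 1)) \<le> (\<Sum>j\<in>{2..k}. \<sigma>\<^sup>2 / real m)"
      proof (rule sum_mono)
        fix j assume "j \<in> {2..k}"
        hence "j - 1 \<in> {1..Suc k}" by auto
        thus "Et (j - 1) \<le> \<sigma>\<^sup>2 / real m" unfolding Et_def by (rule ds_le)
      qed
      thus ?thesis using k2 by (simp add: of_nat_diff)
    qed
    have SD: "(\<Sum>t=1..k. Dt t) \<le> 8 * V + 4 * \<sigma>\<^sup>2 / L\<^sup>2" using Dsum unfolding Dt_def V_def .
    have c_nn: "0 \<le> c" unfolding c_def by simp
    have sumBd: "(\<Sum>j\<in>{2..k}. (\<integral>\<xi>. Bd j \<xi> \<partial>?P)) \<le> 4 * (c + L\<^sup>2) * (8 * V + 4 * \<sigma>\<^sup>2 / L\<^sup>2) + 20 * (real k - 1) * (\<sigma>\<^sup>2 / real m)"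
    proof -
      have "(\<Sum>j\<in>{2..k}. (\<integral>\<xi>. Bd j \<xi> \<partial>?P)) = 4 * c * (\<Sum>j\<in>{2..k}. Dt j) + 4 * L\<^sup>2 * (\<Sum>j\<in>{2..k}. Dt (j - 1))
          + 16 * (\<Sum>j\<in>{2..k}. Et j) + 4 * (\<Sum>j\<in>{2..k}. Et (j - 1))"
        using Bd_val unfolding Dt_def Et_def by (simp add: sum.distrib sum_distrib_left)
      also have "\<dots> \<le> 4 * c * (\<Sum>t=1..k. Dt t) + 4 * L\<^sup>2 * (\<Sum>t=1..k. Dt t)
          + 16 * ((real k - 1) * (\<sigma>\<^sup>2 / real m)) + 4 * ((real k - 1) * (\<sigma>\<^sup>2 / real m))"
        using s1 s2 s3 s4 c_nn by (intro add_mono mult_left_mono) auto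
      also have "\<dots> = 4 * (c + L\<^sup>2) * (\<Sum>t=1..k. Dt t) + 20 * (real k - 1) * (\<sigma>\<^sup>2 / real m)"
        using m_pos by (simp add: field_simps)
      also have "\<dots> \<le> 4 * (c + L\<^sup>2) * (8 * V + 4 * \<sigma>\<^sup>2 / L\<^sup>2) + 20 * (real k - 1) * (\<sigma>\<^sup>2 / real m)"
        using SD c_nn k1 by (intro add_mono mult_left_mono) auto
      finally show ?thesis .
    qed
    have Bd_int_nn: "0 \<le> (\<integral>\<xi>. Bd j \<xi> \<partial>?P)" for j using Bd_nn by (simp add: Bochner_Integration.integral_nonneg)
    have sum_enn: "(\<Sum>j\<in>{2..k}. ennreal (1 / (real k - 1)) * ennreal (\<integral>\<xi>. Bd j \<xi> \<partial>?P))
        = ennreal (1 / (real k - 1) * (\<Sum>j\<in>{2..k}. (\<integral>\<xi>. Bd j \<xi> \<partial>?P)))"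
      using K1 Bd_int_nn by (simp add: ennreal_mult[symmetric] sum_ennreal sum_distrib_left)
    have final_real: "1 / (real k - 1) * (\<Sum>j\<in>{2..k}. (\<integral>\<xi>. Bd j \<xi> \<partial>?P))
        \<le> 20 * \<sigma>\<^sup>2 / (real k + 1) + 32 * ((L + 4 * L * Lw)\<^sup>2 + L\<^sup>2) * (2 * V + \<sigma>\<^sup>2 / L\<^sup>2) / (real k - 1)"
    proof -
      have "1 / (real k - 1) * (\<Sum>j\<in>{2..k}. (\<integral>\<xi>. Bd j \<xi> \<partial>?P))
          \<le> 1 / (real k - 1) * (4 * (c + L\<^sup>2) * (8 * V + 4 * \<sigma>\<^sup>2 / L\<^sup>2) + 20 * (real k - 1) * (\<sigma>\<^sup>2 / real m))"
        using sumBd K1 by (intro mult_left_mono) auto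
      also have "\<dots> = 16 * (c + L\<^sup>2) * (2 * V + \<sigma>\<^sup>2 / L\<^sup>2) / (real k - 1) + 20 * \<sigma>\<^sup>2 / (real k + 1)"
        using K1 L_pos mk by (simp add: field_simps)
      also have "\<dots> \<le> 32 * (c + L\<^sup>2) * (2 * V + \<sigma>\<^sup>2 / L\<^sup>2) / (real k - 1) + 20 * \<sigma>\<^sup>2 / (real k + 1)"
      proof -
        define Z where "Z = (c + L\<^sup>2) * (2 * V + \<sigma>\<^sup>2 / L\<^sup>2)"
        have "0 \<le> Z" unfolding Z_def using c_nn Vnn by simp
        hence "16 * Z / (real k - 1) \<le> 32 * Z / (real k - 1)" using K1 by (intro divide_right_mono) auto
        hence "16 * (c + L\<^sup>2) * (2 * V + \<sigma>\<^sup>2 / L\<^sup>2) / (real k - 1) \<le> 32 * (c + L\<^sup>2) * (2 * V + \<sigma>\<^sup>2 / L\<^sup>2) / (real k - 1)"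
          unfolding Z_def by (simp only: mult.assoc)
        thus ?thesis by linarith
      qed
      finally show ?thesis unfolding c_def by simp
    qed
    have "(\<integral>\<^sup>+ \<omega>. ennreal ((residual X F (x (R \<omega> + 1) \<omega>))\<^sup>2) \<partial>M)
        \<le> ennreal (1 / (real k - 1) * (\<Sum>j\<in>{2..k}. (\<integral>\<xi>. Bd j \<xi> \<partial>?P)))"
      using le1 eq2 sum_enn by simp
    also have "\<dots> \<le> ennreal (20 * \<sigma>\<^sup>2 / (real k + 1) + 32 * ((L + 4 * L * Lw)\<^sup>2 + L\<^sup>2) * (2 * bregman w gw x1 xs + \<sigma>\<^sup>2 / L\<^sup>2) / (real k - 1))"
      using final_real unfolding V_def by (rule ennreal_leI)
    finally show "(\<integral>\<^sup>+ \<omega>. ennreal ((residual X F (x (R \<omega> + 1) \<omega>))\<^sup>2) \<partial>M)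
        \<le> ennreal (20 * \<sigma>\<^sup>2 / (real k + 1) + 32 * ((L + 4 * L * Lw)\<^sup>2 + L\<^sup>2) * (2 * bregman w gw x1 xs + \<sigma>\<^sup>2 / L\<^sup>2) / (real k - 1))" .
  qed
qed


end
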